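(* The number of $M$-equivalence classes of vertices of $\mathcal H$ (i.e. the maximal number of pairwise $M$-distinct vertices of $\mathcal H$) is exactly $5\cdot 4^{n-1}-2^{n+2}+4$, which equals the number of admissible signatures $|S|$.
   Context: Let $n\ge 1$, $[n]=\{0,\dots,n-1\}$, and real numbers $\gamma_0<\dots<\gamma_{n-1}$. For $\mathbf v=(v_{ydz})_{y\in[n],d,z\in\{0,1\}}\in\mathbb R^{4n}$ define $(M\mathbf v)_{(i,j,d_0,d_1)}=\sum_{z:d_z=0}v_{i0z}+\sum_{z:d_z=1}v_{j1z}$ for $i,j\in[n]$, $(d_0,d_1)\in\{0,1\}^2$, and $c_{(i,j,d_0,d_1)}=\gamma_j-\gamma_i$; $\mathcal H=\{\mathbf v:M\mathbf v\le\mathbf c\}$. Vectors $\mathbf v_1,\mathbf v_2$ are $M$-equivalent if $M\mathbf v_1=M\mathbf v_2$, $M$-distinct otherwise. $\mathbf v\in\mathcal H$ is a vertex if any representation $\mathbf v=\lambda\mathbf v_1+(1-\lambda)\mathbf v_2$, $\lambda\in(0,1)$, $\mathbf v_1,\mathbf v_2\in\mathcal H$, forces $M\mathbf v_1=M\mathbf v_2=M\mathbf v$. $S=S_1\cup S_2\cup S_3\subseteq\{0,1\}^{n\times2\times2}$, where: $\mathbf B\in S_1$ iff some $t\in\{0,\dots,n-2\}$ has $B_{i00}=B_{i01}=1$ for $i\ge t$ and $B_{i00}\ne B_{i01}$ for $i<t$, $B_{i10}\ne B_{i11}$ for all $i$, and some $i,j$ have $B_{i10}=B_{j11}=1$; $\mathbf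 B\in S_2$ iff $B_{(n-1)00}=B_{(n-1)01}=B_{010}=B_{011}=1$, $B_{i00}\ne B_{i01}$ for $i<n-1$, $B_{j10}\ne B_{j11}$ for $j>0$; $\mathbf B\in S_3$ iff some $t\in\{1,\dots,n-1\}$ has $B_{i10}=B_{i11}=1$ for $i\le t$ and $B_{i10}\ne B_{i11}$ for $i>t$, $B_{i00}\ne B_{i01}$ for all $i$, and some $i,j$ have $B_{i00}=B_{j01}=1$. *)

theory Defs
  imports Complex_Main
begin

text \<open>Encoding: a vector v in R^{4n} is a function v y d z with y < n and
 d, z :: bool (False = 0, True = 1).  Only entries with y < n are meaningful.\<close>

definition Mrow :: "(nat \<Rightarrow> bool \<Rightarrow> bool \<Rightarrow> real) \<Rightarrow> nat \<Rightarrow> nat \<Rightarrow> bool \<Rightarrow> bool \<Rightarrow> real" where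
  "Mrow v i j d0 d1 =
     (if d0 then v j True False else v i False False) +
     (if d1 then v j True True else v i False True)"

definition Mvec :: "nat \<Rightarrow> (nat \<Rightarrow> bool \<Rightarrow> bool \<Rightarrow> real) \<Rightarrow> (nat \<times> nat \<times> bool \<times> bool \<Rightarrow> real)" where
  "Mvec n v = (\<lambda>(i, j, d0, d1). if i < n \<and> j < n then Mrow v i j d0 d1 else 0)"

definition Hpoly :: "nat \<Rightarrow> (nat \<Rightarrow> real) \<Rightarrow> (nat \<Rightarrow> bool \<Rightarrow> bool \<Rightarrow> real) set" where
  "Hpoly n \<gamma> = {v. \<forall>i<n. \<forall>j<n. \<forall>d0 d1. Mrow v i j d0 d1 \<le> \<gamma> j - \<gamma> i}"

definition is_vertex :: "nat \<Rightarrow> (nat \<Rightarrow> real) \<Rightarrow> (nat \<Rightarrow> bool \<Rightarrow> bool \<Rightarrow> real) \<Rightarrow> bool" where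
  "is_vertex n \<gamma> v \<longleftrightarrow> v \<in> Hpoly n \<gamma> \<and>
     (\<forall>v1 v2 (l::real). 0 < l \<and> l < 1 \<and> v1 \<in> Hpoly n \<gamma> \<and> v2 \<in> Hpoly n \<gamma> \<and>
        (\<forall>y<n. \<forall>d z. v y d z = l * v1 y d z + (1 - l) * v2 y d z)
        \<longrightarrow> Mvec n v1 = Mvec n v \<and> Mvec n v2 = Mvec n v)"

definition arrays :: "nat \<Rightarrow> (nat \<Rightarrow> bool \<Rightarrow> bool \<Rightarrow> bool) set" where
  "arrays n = {B. \<forall>y d z. n \<le> y \<longrightarrow> \<not> B y d z}"

definition S1 :: "nat \<Rightarrow> (nat \<Rightarrow> bool \<Rightarrow> bool \<Rightarrow> bool) set" where
  "S1 n = {B \<in> arrays n. \<exists>t. t + 2 \<le> n \<and>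
      (\<forall>i. t \<le> i \<and> i < n \<longrightarrow> B i False False \<and> B i False True) \<and>
      (\<forall>i<t. B i False False \<noteq> B i False True) \<and>
      (\<forall>i<n. B i True False \<noteq> B i True True) \<and>
      (\<exists>i<n. \<exists>j<n. B i True False \<and> B j True True)}"

definition S2 :: "nat \<Rightarrow> (nat \<Rightarrow> bool \<Rightarrow> bool \<Rightarrow> bool) set" where
  "S2 n = {B \<in> arrays n.
      B (n - 1) False False \<and> B (n - 1) False True \<and> B 0 True False \<and> B 0 True True \<and>
      (\<forall>i. i < n - 1 \<longrightarrow> B i False False \<noteq> B i False True) \<and>
      (\<forall>j. 0 < j \<and> j < n \<longrightarrow> B j True False \<noteq> B j True True)}"

definition S3 :: "nat \<Rightarrow> (nat \<Rightarrow> bool \<Rightarrow> bool \<Rightarrow> bool) set" where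
  "S3 n = {B \<in> arrays n. \<exists>t. 1 \<le> t \<and> t + 1 \<le> n \<and>
      (\<forall>i\<le>t. B i True False \<and> B i True True) \<and>
      (\<forall>i. t < i \<and> i < n \<longrightarrow> B i True False \<noteq> B i True True) \<and>
      (\<forall>i<n. B i False False \<noteq> B i False True) \<and>
      (\<exists>i<n. \<exists>j<n. B i False False \<and> B j False True)}"

definition Ssig :: "nat \<Rightarrow> (nat \<Rightarrow> bool \<Rightarrow> bool \<Rightarrow> bool) set" where
  "Ssig n = S1 n \<union> S2 n \<union> S3 n"

end

theory Submission
  imports Defs "HOL-Library.FuncSet"
begin

definition pp :: "(nat \<Rightarrow> real) \<Rightarrow> (nat \<Rightarrow> bool \<Rightarrow> bool \<Rightarrow> real) \<Rightarrow> nat \<Rightarrow> real" where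
  "pp \<gamma> v i = v i False False + \<gamma> i"
definition qq :: "(nat \<Rightarrow> real) \<Rightarrow> (nat \<Rightarrow> bool \<Rightarrow> bool \<Rightarrow> real) \<Rightarrow> nat \<Rightarrow> real" where
  "qq \<gamma> v i = v i False True + \<gamma> i"
definition rr :: "(nat \<Rightarrow> real) \<Rightarrow> (nat \<Rightarrow> bool \<Rightarrow> bool \<Rightarrow> real) \<Rightarrow> nat \<Rightarrow> real" where
  "rr \<gamma> v i = v i True False - \<gamma> i"
definition ss :: "(nat \<Rightarrow> real) \<Rightarrow> (nat \<Rightarrow> bool \<Rightarrow> bool \<Rightarrow> real) \<Rightarrow> nat \<Rightarrow> real" where
  "ss \<gamma> v i = v i True True - \<gamma> i"

lemma Mrow_simps:
  "Mrow v i j False False = v i False False + v i False True"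
  "Mrow v i j False True = v i False False + v j True True"
  "Mrow v i j True False = v j True False + v i False True"
  "Mrow v i j True True = v j True False + v j True True"
  by (simp_all add: Mrow_def)

lemma Mrow_lin: "Mrow (\<lambda>y d z. v y d z + e * w y d z) i j d0 d1 = Mrow v i j d0 d1 + e * Mrow w i j d0 d1"
  by (simp add: Mrow_def algebra_simps)

lemma perturb:
  assumes vH: "v \<in> Hpoly n \<gamma>"
    and sl: "\<And>i j d0 d1. i < n \<Longrightarrow> j < n \<Longrightarrow> Mrow w i j d0 d1 \<noteq> 0 \<Longrightarrow> Mrow v i j d0 d1 < \<gamma> j - \<gamma> i"
    and wit: "i0 < n" "j0 < n" "Mrow w i0 j0 e0 e1 \<noteq> 0"
  shows "\<not> is_vertex n \<gamma> v"
proof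
  assume vert: "is_vertex n \<gamma> v"
  define C where "C = {c \<in> {..<n} \<times> {..<n} \<times> (UNIV::bool set) \<times> (UNIV::bool set).
      Mrow w (fst c) (fst (snd c)) (fst (snd (snd c))) (snd (snd (snd c))) \<noteq> 0}"
  define \<delta> where "\<delta> = (\<lambda>c. (\<gamma> (fst (snd c)) - \<gamma> (fst c) - Mrow v (fst c) (fst (snd c)) (fst (snd (snd c))) (snd (snd (snd c))))
      / \<bar>Mrow w (fst c) (fst (snd c)) (fst (snd (snd c))) (snd (snd (snd c)))\<bar>)"
  have finC: "finite C" unfolding C_def
    by (rule finite_subset[of _ "{..<n} \<times> {..<n} \<times> (UNIV::bool set) \<times> (UNIV::bool set)"]) auto
  have c0: "(i0, j0, e0, e1) \<in> C" using wit by (simp add: C_def)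
  define \<epsilon> where "\<epsilon> = Min (\<delta> ` C)"
  have dpos: "\<delta> c > 0" if "c \<in> C" for c
    using that sl[of "fst c" "fst (snd c)" "fst (snd (snd c))" "snd (snd (snd c))"]
    by (auto simp: C_def \<delta>_def)
  have epos: "\<epsilon> > 0" unfolding \<epsilon>_def using finC c0 dpos by (subst Min_gr_iff) auto
  have ele: "\<epsilon> \<le> \<delta> c" if "c \<in> C" for c unfolding \<epsilon>_def using finC that by simp
  have key: "\<epsilon> * \<bar>Mrow w i j d0 d1\<bar> \<le> \<gamma> j - \<gamma> i - Mrow v i j d0 d1" if "i < n" "j < n" for i j d0 d1
  proof (cases "Mrow w i j d0 d1 = 0")
    case True
    then show ?thesis using vH that by (simp add: Hpoly_def)
  next
    case False
    then have cC: "(i, j, d0, d1) \<in> C" using that by (simp add: C_def)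
    have "\<epsilon> \<le> (\<gamma> j - \<gamma> i - Mrow v i j d0 d1) / \<bar>Mrow w i j d0 d1\<bar>"
      using ele[OF cC] by (simp add: \<delta>_def)
    then show ?thesis using False by (simp add: le_divide_eq)
  qed
  define v1 where "v1 = (\<lambda>y d z. v y d z + \<epsilon> * w y d z)"
  define v2 where "v2 = (\<lambda>y d z. v y d z + (- \<epsilon>) * w y d z)"
  have v1H: "v1 \<in> Hpoly n \<gamma>"
    unfolding Hpoly_def v1_def
  proof (intro CollectI allI impI)
    fix i j d0 d1 assume "i < n" "j < n"
    from key[OF this, of d0 d1] show "Mrow (\<lambda>y d z. v y d z + \<epsilon> * w y d z) i j d0 d1 \<le> \<gamma> j - \<gamma> i"
      unfolding Mrow_lin using epos mult_left_mono[OF abs_ge_self[of "Mrow w i j d0 d1"], of \<epsilon>]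
      by linarith
  qed
  have v2H: "v2 \<in> Hpoly n \<gamma>"
    unfolding Hpoly_def v2_def
  proof (intro CollectI allI impI)
    fix i j d0 d1 assume "i < n" "j < n"
    from key[OF this, of d0 d1] show "Mrow (\<lambda>y d z. v y d z + (- \<epsilon>) * w y d z) i j d0 d1 \<le> \<gamma> j - \<gamma> i"
      unfolding Mrow_lin using epos mult_left_mono[OF abs_ge_minus_self[of "Mrow w i j d0 d1"], of \<epsilon>]
      by simp
  qed
  have comb: "\<forall>y<n. \<forall>d z. v y d z = (1/2) * v1 y d z + (1 - 1/2) * v2 y d z"
    by (simp add: v1_def v2_def algebra_simps)
  have "Mvec n v1 = Mvec n v"
    using vert unfolding is_vertex_def apply (elim conjE)
    apply (drule spec[of _ v1], drule spec[of _ v2], drule spec[of _ "1/2"])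
    using v1H v2H comb by simp
  then have "Mvec n v1 (i0, j0, e0, e1) = Mvec n v (i0, j0, e0, e1)" by simp
  then have "Mrow v1 i0 j0 e0 e1 = Mrow v i0 j0 e0 e1" using wit by (simp add: Mvec_def)
  then show False using wit epos unfolding v1_def Mrow_lin by simp
qed

definition PM where "PM n \<gamma> v = Max (pp \<gamma> v ` {..<n})"
definition QM where "QM n \<gamma> v = Max (qq \<gamma> v ` {..<n})"
definition RM where "RM n \<gamma> v = Max (rr \<gamma> v ` {..<n})"
definition SM where "SM n \<gamma> v = Max (ss \<gamma> v ` {..<n})"
definition gg :: "(nat \<Rightarrow> real) \<Rightarrow> nat \<Rightarrow> real" where "gg \<gamma> i = \<gamma> 0 + \<gamma> i"
definition hh :: "nat \<Rightarrow> (nat \<Rightarrow> real) \<Rightarrow> nat \<Rightarrow> real" where "hh n \<gamma> j = - (\<gamma> j + \<gamma> (n - 1))"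

definition good :: "nat \<Rightarrow> (nat \<Rightarrow> real) \<Rightarrow> (nat \<Rightarrow> bool \<Rightarrow> bool \<Rightarrow> real) \<Rightarrow> bool" where
  "good n \<gamma> v \<longleftrightarrow>
    PM n \<gamma> v + SM n \<gamma> v = 0 \<and> QM n \<gamma> v + RM n \<gamma> v = 0 \<and>
    (\<forall>i<n. pp \<gamma> v i = PM n \<gamma> v \<or> (pp \<gamma> v i + qq \<gamma> v i = gg \<gamma> i \<and> qq \<gamma> v i = QM n \<gamma> v)) \<and>
    (\<forall>i<n. qq \<gamma> v i = QM n \<gamma> v \<or> (pp \<gamma> v i + qq \<gamma> v i = gg \<gamma> i \<and> pp \<gamma> v i = PM n \<gamma> v)) \<and>
    (\<forall>j<n. rr \<gamma> v j = RM n \<gamma> v \<or> (rr \<gamma> v j + ss \<gamma> v j = hh n \<gamma> j \<and> ss \<gamma> v j = SM n \<gamma> v)) \<and>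
    (\<forall>j<n. ss \<gamma> v j = SM n \<gamma> v \<or> (rr \<gamma> v j + ss \<gamma> v j = hh n \<gamma> j \<and> rr \<gamma> v j = RM n \<gamma> v)) \<and>
    ((\<exists>i<n. pp \<gamma> v i = PM n \<gamma> v \<and> qq \<gamma> v i = QM n \<gamma> v \<and> pp \<gamma> v i + qq \<gamma> v i = gg \<gamma> i) \<or>
     (\<exists>j<n. rr \<gamma> v j = RM n \<gamma> v \<and> ss \<gamma> v j = SM n \<gamma> v \<and> rr \<gamma> v j + ss \<gamma> v j = hh n \<gamma> j))"

context
  fixes n :: nat and \<gamma> :: "nat \<Rightarrow> real"
  assumes n1: "1 \<le> n"
    and gmono: "\<And>i j. i < j \<Longrightarrow> j < n \<Longrightarrow> \<gamma> i < \<gamma> j"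
begin

lemma gle: "i \<le> j \<Longrightarrow> j < n \<Longrightarrow> \<gamma> i \<le> \<gamma> j"
  using gmono by (cases "i = j") (auto simp: order_le_less)

lemma H_iff: "v \<in> Hpoly n \<gamma> \<longleftrightarrow>
   (\<forall>i<n. pp \<gamma> v i + qq \<gamma> v i \<le> gg \<gamma> i) \<and>
   (\<forall>i<n. \<forall>j<n. pp \<gamma> v i + ss \<gamma> v j \<le> 0) \<and>
   (\<forall>i<n. \<forall>j<n. rr \<gamma> v j + qq \<gamma> v i \<le> 0) \<and>
   (\<forall>j<n. rr \<gamma> v j + ss \<gamma> v j \<le> hh n \<gamma> j)"
proof
  assume H: "v \<in> Hpoly n \<gamma>"
  have c: "\<And>i j d0 d1. i < n \<Longrightarrow> j < n \<Longrightarrow> Mrow v i j d0 d1 \<le> \<gamma> j - \<gamma> i"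
    using H by (simp add: Hpoly_def)
  have n0: "0 < n" "n - 1 < n" using n1 by auto
  show "(\<forall>i<n. pp \<gamma> v i + qq \<gamma> v i \<le> gg \<gamma> i) \<and>
   (\<forall>i<n. \<forall>j<n. pp \<gamma> v i + ss \<gamma> v j \<le> 0) \<and>
   (\<forall>i<n. \<forall>j<n. rr \<gamma> v j + qq \<gamma> v i \<le> 0) \<and>
   (\<forall>j<n. rr \<gamma> v j + ss \<gamma> v j \<le> hh n \<gamma> j)"
  proof (intro conjI allI impI)
    fix i assume "i < n" then show "pp \<gamma> v i + qq \<gamma> v i \<le> gg \<gamma> i"
      using c[of i 0 False False] n0 by (simp add: Mrow_simps pp_def qq_def gg_def)
  next
    fix i j assume "i < n" "j < n" then show "pp \<gamma> v i + ss \<gamma> v j \<le> 0"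
      using c[of i j False True] by (simp add: Mrow_simps pp_def ss_def)
  next
    fix i j assume "i < n" "j < n" then show "rr \<gamma> v j + qq \<gamma> v i \<le> 0"
      using c[of i j True False] by (simp add: Mrow_simps rr_def qq_def)
  next
    fix j assume "j < n" then show "rr \<gamma> v j + ss \<gamma> v j \<le> hh n \<gamma> j"
      using c[of "n - 1" j True True] n0 by (simp add: Mrow_simps rr_def ss_def hh_def)
  qed
next
  assume A: "(\<forall>i<n. pp \<gamma> v i + qq \<gamma> v i \<le> gg \<gamma> i) \<and>
   (\<forall>i<n. \<forall>j<n. pp \<gamma> v i + ss \<gamma> v j \<le> 0) \<and>
   (\<forall>i<n. \<forall>j<n. rr \<gamma> v j + qq \<gamma> v i \<le> 0) \<and>
   (\<forall>j<n. rr \<gamma> v j + ss \<gamma> v j \<le> hh n \<gamma> j)"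
  show "v \<in> Hpoly n \<gamma>" unfolding Hpoly_def
  proof (intro CollectI allI impI)
    fix i j d0 d1 assume ij: "i < n" "j < n"
    have g1: "\<gamma> 0 \<le> \<gamma> j" using gle[of 0 j] ij by simp
    have g2: "\<gamma> i \<le> \<gamma> (n - 1)" using gle[of i "n - 1"] ij by simp
    have a1: "pp \<gamma> v i + qq \<gamma> v i \<le> gg \<gamma> i" using A ij by blast
    have a2: "pp \<gamma> v i + ss \<gamma> v j \<le> 0" using A ij by blast
    have a3: "rr \<gamma> v j + qq \<gamma> v i \<le> 0" using A ij by blast
    have a4: "rr \<gamma> v j + ss \<gamma> v j \<le> hh n \<gamma> j" using A ij by blast
    show "Mrow v i j d0 d1 \<le> \<gamma> j - \<gamma> i"
      using a1 a2 a3 a4 g1 g2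
      by (cases d0; cases d1; simp add: Mrow_simps pp_def qq_def rr_def ss_def gg_def hh_def)
  qed
qed

end

context
  fixes n :: nat and \<gamma> :: "nat \<Rightarrow> real"
  assumes n1: "1 \<le> n"
    and gmono: "\<And>i j. i < j \<Longrightarrow> j < n \<Longrightarrow> \<gamma> i < \<gamma> j"
begin

lemma gle': "i \<le> j \<Longrightarrow> j < n \<Longrightarrow> \<gamma> i \<le> \<gamma> j"
  using gmono by (cases "i = j") (auto simp: order_le_less)

lemma nne: "{..<n} \<noteq> {}" proof - have "0 \<in> {..<n}" using n1 by simp then show ?thesis by blast qed

lemma pp_le: "i < n \<Longrightarrow> pp \<gamma> v i \<le> PM n \<gamma> v" by (simp add: PM_def)
lemma qq_le: "i < n \<Longrightarrow> qq \<gamma> v i \<le> QM n \<gamma> v" by (simp add: QM_def)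
lemma rr_le: "i < n \<Longrightarrow> rr \<gamma> v i \<le> RM n \<gamma> v" by (simp add: RM_def)
lemma ss_le: "i < n \<Longrightarrow> ss \<gamma> v i \<le> SM n \<gamma> v" by (simp add: SM_def)
lemma pp_ex: "\<exists>i<n. pp \<gamma> v i = PM n \<gamma> v"
  using Max_in[of "pp \<gamma> v ` {..<n}"] nne unfolding PM_def by fastforce
lemma qq_ex: "\<exists>i<n. qq \<gamma> v i = QM n \<gamma> v"
  using Max_in[of "qq \<gamma> v ` {..<n}"] nne unfolding QM_def by fastforce
lemma rr_ex: "\<exists>i<n. rr \<gamma> v i = RM n \<gamma> v"
  using Max_in[of "rr \<gamma> v ` {..<n}"] nne unfolding RM_def by fastforce
lemma ss_ex: "\<exists>i<n. ss \<gamma> v i = SM n \<gamma> v"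
  using Max_in[of "ss \<gamma> v ` {..<n}"] nne unfolding SM_def by fastforce

context
  fixes v assumes vH: "v \<in> Hpoly n \<gamma>"
begin

abbreviation "P \<equiv> PM n \<gamma> v"
abbreviation "Q \<equiv> QM n \<gamma> v"
abbreviation "R \<equiv> RM n \<gamma> v"
abbreviation "S \<equiv> SM n \<gamma> v"
abbreviation "tU i \<equiv> pp \<gamma> v i + qq \<gamma> v i = gg \<gamma> i"
abbreviation "tV j \<equiv> rr \<gamma> v j + ss \<gamma> v j = hh n \<gamma> j"

lemma Hpq: "i < n \<Longrightarrow> pp \<gamma> v i + qq \<gamma> v i \<le> gg \<gamma> i" using vH H_iff[of n \<gamma> v, OF n1 gmono] by blast
lemma Hps: "i < n \<Longrightarrow> j < n \<Longrightarrow> pp \<gamma> v i + ss \<gamma> v j \<le> 0" using vH H_iff[of n \<gamma> v, OF n1 gmono] by blast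
lemma Hrq: "i < n \<Longrightarrow> j < n \<Longrightarrow> rr \<gamma> v j + qq \<gamma> v i \<le> 0" using vH H_iff[of n \<gamma> v, OF n1 gmono] by blast
lemma Hrs: "j < n \<Longrightarrow> rr \<gamma> v j + ss \<gamma> v j \<le> hh n \<gamma> j" using vH H_iff[of n \<gamma> v, OF n1 gmono] by blast

lemma PS_le: "P + S \<le> 0"
  using pp_ex[of v] ss_ex[of v] Hps by force
lemma QR_le: "Q + R \<le> 0"
  using qq_ex[of v] rr_ex[of v] Hrq by force

lemma strict_ps: "i < n \<Longrightarrow> j < n \<Longrightarrow> \<not> (pp \<gamma> v i = P \<and> P + S = 0) \<Longrightarrow> v i False False + v j True True < \<gamma> j - \<gamma> i"
  using pp_le[of i v] ss_le[of j v] PS_le unfolding pp_def ss_def by (smt (verit))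
lemma strict_ps': "i < n \<Longrightarrow> j < n \<Longrightarrow> \<not> (ss \<gamma> v j = S \<and> P + S = 0) \<Longrightarrow> v i False False + v j True True < \<gamma> j - \<gamma> i"
  using pp_le[of i v] ss_le[of j v] PS_le unfolding pp_def ss_def by (smt (verit))
lemma strict_rq: "i < n \<Longrightarrow> j < n \<Longrightarrow> \<not> (qq \<gamma> v i = Q \<and> Q + R = 0) \<Longrightarrow> v j True False + v i False True < \<gamma> j - \<gamma> i"
  using qq_le[of i v] rr_le[of j v] QR_le unfolding qq_def rr_def by (smt (verit))
lemma strict_rq': "i < n \<Longrightarrow> j < n \<Longrightarrow> \<not> (rr \<gamma> v j = R \<and> Q + R = 0) \<Longrightarrow> v j True False + v i False True < \<gamma> j - \<gamma> i"
  using qq_le[of i v] rr_le[of j v] QR_le unfolding qq_def rr_def by (smt (verit))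
lemma strict_pq: assumes "i < n" "j < n" "\<not> tU i" shows "v i False False + v i False True < \<gamma> j - \<gamma> i"
proof -
  have "pp \<gamma> v i + qq \<gamma> v i < gg \<gamma> i" using Hpq[OF assms(1)] assms(3) by (simp add: order_less_le)
  moreover have "\<gamma> 0 \<le> \<gamma> j" using assms(2) by (intro gle') auto
  ultimately show ?thesis unfolding pp_def qq_def gg_def by linarith
qed
lemma strict_rs: assumes "i < n" "j < n" "\<not> tV j" shows "v j True False + v j True True < \<gamma> j - \<gamma> i"
proof -
  have "rr \<gamma> v j + ss \<gamma> v j < hh n \<gamma> j" using Hrs[OF assms(2)] assms(3) by (simp add: order_less_le)
  moreover have "\<gamma> i \<le> \<gamma> (n - 1)" using assms(1) by (intro gle') auto
  ultimately show ?thesis unfolding rr_def ss_def hh_def by linarith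
qed

lemma nv_p: assumes "i < n" "\<not> tU i" "\<not> (pp \<gamma> v i = P \<and> P + S = 0)"
  shows "\<not> is_vertex n \<gamma> v"
proof (rule perturb[OF vH, of "\<lambda>y d z. if y = i \<and> \<not> d \<and> \<not> z then 1 else 0" i 0 False False])
  fix i' j d0 d1 assume a: "i' < n" "j < n" "Mrow (\<lambda>y d z. if y = i \<and> \<not> d \<and> \<not> z then 1 else 0) i' j d0 d1 \<noteq> 0"
  then have "i' = i \<and> \<not> d0" by (cases d0; cases d1; auto simp: Mrow_simps split: if_splits)
  then show "Mrow v i' j d0 d1 < \<gamma> j - \<gamma> i'"
    using strict_pq[of i j] strict_ps[of i j] assms a by (cases d1; simp add: Mrow_simps)
qed (use assms n1 in \<open>auto simp: Mrow_simps\<close>)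

lemma nv_q: assumes "i < n" "\<not> tU i" "\<not> (qq \<gamma> v i = Q \<and> Q + R = 0)"
  shows "\<not> is_vertex n \<gamma> v"
proof (rule perturb[OF vH, of "\<lambda>y d z. if y = i \<and> \<not> d \<and> z then 1 else 0" i 0 False False])
  fix i' j d0 d1 assume a: "i' < n" "j < n" "Mrow (\<lambda>y d z. if y = i \<and> \<not> d \<and> z then 1 else 0) i' j d0 d1 \<noteq> 0"
  then have "i' = i \<and> \<not> d1" by (cases d0; cases d1; auto simp: Mrow_simps split: if_splits)
  then show "Mrow v i' j d0 d1 < \<gamma> j - \<gamma> i'"
    using strict_pq[of i j] strict_rq[of i j] assms a by (cases d0; simp add: Mrow_simps)
qed (use assms n1 in \<open>auto simp: Mrow_simps\<close>)

lemma nv_pq: assumes "i < n" "\<not> (pp \<gamma> v i = P \<and> P + S = 0)" "\<not> (qq \<gamma> v i = Q \<and> Q + R = 0)"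
  shows "\<not> is_vertex n \<gamma> v"
proof (rule perturb[OF vH, of "\<lambda>y d z. if y = i \<and> \<not> d then (if z then -1 else 1) else 0" i 0 False True])
  fix i' j d0 d1 assume a: "i' < n" "j < n" "Mrow (\<lambda>y d z. if y = i \<and> \<not> d then (if z then -1 else 1) else 0) i' j d0 d1 \<noteq> 0"
  then have "i' = i \<and> d0 \<noteq> d1" by (cases d0; cases d1; auto simp: Mrow_simps split: if_splits)
  then show "Mrow v i' j d0 d1 < \<gamma> j - \<gamma> i'"
    using strict_ps[of i j] strict_rq[of i j] assms a by (cases d0; cases d1; simp add: Mrow_simps)
qed (use assms n1 in \<open>auto simp: Mrow_simps\<close>)

lemma nv_r: assumes "j < n" "\<not> tV j" "\<not> (rr \<gamma> v j = R \<and> Q + R = 0)"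
  shows "\<not> is_vertex n \<gamma> v"
proof (rule perturb[OF vH, of "\<lambda>y d z. if y = j \<and> d \<and> \<not> z then 1 else 0" 0 j True False])
  fix i j' d0 d1 assume a: "i < n" "j' < n" "Mrow (\<lambda>y d z. if y = j \<and> d \<and> \<not> z then 1 else 0) i j' d0 d1 \<noteq> 0"
  then have "j' = j \<and> d0" by (cases d0; cases d1; auto simp: Mrow_simps split: if_splits)
  then show "Mrow v i j' d0 d1 < \<gamma> j' - \<gamma> i"
    using strict_rs[of i j] strict_rq'[of i j] assms a by (cases d1; simp add: Mrow_simps)
qed (use assms n1 in \<open>auto simp: Mrow_simps\<close>)

lemma nv_s: assumes "j < n" "\<not> tV j" "\<not> (ss \<gamma> v j = S \<and> P + S = 0)"
  shows "\<not> is_vertex n \<gamma> v"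
proof (rule perturb[OF vH, of "\<lambda>y d z. if y = j \<and> d \<and> z then 1 else 0" 0 j True True])
  fix i j' d0 d1 assume a: "i < n" "j' < n" "Mrow (\<lambda>y d z. if y = j \<and> d \<and> z then 1 else 0) i j' d0 d1 \<noteq> 0"
  then have "j' = j \<and> d1" by (cases d0; cases d1; auto simp: Mrow_simps split: if_splits)
  then show "Mrow v i j' d0 d1 < \<gamma> j' - \<gamma> i"
    using strict_rs[of i j] strict_ps'[of i j] assms a by (cases d0; simp add: Mrow_simps)
qed (use assms n1 in \<open>auto simp: Mrow_simps\<close>)

lemma nv_rs: assumes "j < n" "\<not> (rr \<gamma> v j = R \<and> Q + R = 0)" "\<not> (ss \<gamma> v j = S \<and> P + S = 0)"
  shows "\<not> is_vertex n \<gamma> v"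
proof (rule perturb[OF vH, of "\<lambda>y d z. if y = j \<and> d then (if z then -1 else 1) else 0" 0 j True False])
  fix i j' d0 d1 assume a: "i < n" "j' < n" "Mrow (\<lambda>y d z. if y = j \<and> d then (if z then -1 else 1) else 0) i j' d0 d1 \<noteq> 0"
  then have "j' = j \<and> d0 \<noteq> d1" by (cases d0; cases d1; auto simp: Mrow_simps split: if_splits)
  then show "Mrow v i j' d0 d1 < \<gamma> j' - \<gamma> i"
    using strict_ps'[of i j] strict_rq'[of i j] assms a by (cases d0; cases d1; simp add: Mrow_simps)
qed (use assms n1 in \<open>auto simp: Mrow_simps\<close>)


lemma Nu: assumes "is_vertex n \<gamma> v" "i < n"
  shows "((pp \<gamma> v i = P \<and> P + S = 0) \<or> (tU i \<and> qq \<gamma> v i = Q \<and> Q + R = 0)) \<and>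
         ((qq \<gamma> v i = Q \<and> Q + R = 0) \<or> (tU i \<and> pp \<gamma> v i = P \<and> P + S = 0))"
  using nv_p[OF assms(2)] nv_q[OF assms(2)] nv_pq[OF assms(2)] assms(1) by blast

lemma Nv: assumes "is_vertex n \<gamma> v" "j < n"
  shows "((rr \<gamma> v j = R \<and> Q + R = 0) \<or> (tV j \<and> ss \<gamma> v j = S \<and> P + S = 0)) \<and>
         ((ss \<gamma> v j = S \<and> P + S = 0) \<or> (tV j \<and> rr \<gamma> v j = R \<and> Q + R = 0))"
  using nv_r[OF assms(2)] nv_s[OF assms(2)] nv_rs[OF assms(2)] assms(1) by blast

lemma gh0: "gg \<gamma> (n - 1) + hh n \<gamma> 0 = 0" by (simp add: gg_def hh_def)

lemma live: assumes vert: "is_vertex n \<gamma> v" shows "P + S = 0 \<and> Q + R = 0"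
proof -
  have n0: "n - 1 < n" "0 < n" using n1 by auto
  have a: "pp \<gamma> v (n - 1) + ss \<gamma> v 0 \<le> P + S" using pp_le[OF n0(1), of v] ss_le[OF n0(2), of v] by linarith
  have b: "qq \<gamma> v (n - 1) + rr \<gamma> v 0 \<le> Q + R" using qq_le[OF n0(1), of v] rr_le[OF n0(2), of v] by linarith
  show ?thesis
  proof (intro conjI)
    show "P + S = 0"
    proof (rule ccontr)
      assume c: "P + S \<noteq> 0"
      then have "tU (n - 1) \<and> qq \<gamma> v (n - 1) = Q" "tV 0 \<and> rr \<gamma> v 0 = R" "Q + R = 0"
        using Nu[OF vert n0(1)] Nv[OF vert n0(2)] by auto
      then show False using a c PS_le gh0 by linarith
    qed
    show "Q + R = 0"
    proof (rule ccontr)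
      assume c: "Q + R \<noteq> 0"
      then have "tU (n - 1) \<and> pp \<gamma> v (n - 1) = P" "tV 0 \<and> ss \<gamma> v 0 = S" "P + S = 0"
        using Nu[OF vert n0(1)] Nv[OF vert n0(2)] by auto
      then show False using b c QR_le gh0 by linarith
    qed
  qed
qed

lemma bridge: assumes vert: "is_vertex n \<gamma> v"
  shows "(\<exists>i<n. pp \<gamma> v i = P \<and> qq \<gamma> v i = Q \<and> tU i) \<or> (\<exists>j<n. rr \<gamma> v j = R \<and> ss \<gamma> v j = S \<and> tV j)"
proof (rule ccontr)
  assume nb: "\<not> ?thesis"
  have lv: "P + S = 0" "Q + R = 0" using live[OF vert] by auto
  define w :: "nat \<Rightarrow> bool \<Rightarrow> bool \<Rightarrow> real" where "w = (\<lambda>y d z. if d then (if z then (if ss \<gamma> v y = S then -1 else 0)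
      else (if ss \<gamma> v y = S \<and> tV y then 1 else 0))
      else (if z then (if pp \<gamma> v y = P \<and> tU y then -1 else 0) else (if pp \<gamma> v y = P then 1 else 0)))"
  have Mw: "Mrow w i j False False = (if pp \<gamma> v i = P then 1 else 0) + (if pp \<gamma> v i = P \<and> tU i then -1 else 0)"
    "Mrow w i j False True = (if pp \<gamma> v i = P then 1 else 0) + (if ss \<gamma> v j = S then -1 else 0)"
    "Mrow w i j True False = (if ss \<gamma> v j = S \<and> tV j then 1 else 0) + (if pp \<gamma> v i = P \<and> tU i then -1 else 0)"
    "Mrow w i j True True = (if ss \<gamma> v j = S \<and> tV j then 1 else 0) + (if ss \<gamma> v j = S then -1 else 0)"
    for i j by (simp_all add: Mrow_simps w_def)
  have wit: "\<exists>i<n. \<exists>j<n. \<exists>e0 e1. Mrow w i j e0 e1 \<noteq> 0"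
  proof (rule ccontr)
    assume z: "\<not> ?thesis"
    then have z': "\<And>i j e0 e1. i < n \<Longrightarrow> j < n \<Longrightarrow> Mrow w i j e0 e1 = 0" by blast
    obtain i0 where i0: "i0 < n" "pp \<gamma> v i0 = P" using pp_ex by blast
    obtain j0 where j0: "j0 < n" "ss \<gamma> v j0 = S" using ss_ex by blast
    have n0: "n - 1 < n" "0 < n" using n1 by auto
    have p1: "pp \<gamma> v (n - 1) = P" using z'[OF n0(1) j0(1), of False True] j0 by (auto simp: Mw split: if_splits)
    have s1: "ss \<gamma> v 0 = S" using z'[OF i0(1) n0(2), of False True] i0 by (auto simp: Mw split: if_splits)
    have t1: "tU (n - 1)" using z'[OF n0(1) n0(1), of False False] p1 by (auto simp: Mw split: if_splits)
    have t2: "tV 0" using z'[OF n0(2) n0(2), of True True] s1 by (auto simp: Mw split: if_splits)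
    have "qq \<gamma> v (n - 1) = Q"
      using qq_le[OF n0(1), of v] rr_le[OF n0(2), of v] t1 t2 p1 s1 lv gh0 by linarith
    then show False using nb p1 t1 n0 by blast
  qed
  then obtain i0 j0 e0 e1 where w0: "i0 < n" "j0 < n" "Mrow w i0 j0 e0 e1 \<noteq> 0" by blast
  have "\<not> is_vertex n \<gamma> v"
  proof (rule perturb[OF vH _ w0])
    fix i j d0 d1 assume a: "i < n" "j < n" "Mrow w i j d0 d1 \<noteq> 0"
    show "Mrow v i j d0 d1 < \<gamma> j - \<gamma> i"
    proof (cases d0; cases d1)
      assume d: "\<not> d0" "\<not> d1"
      then have "\<not> tU i" using a by (auto simp: Mw split: if_splits)
      then show ?thesis using strict_pq[OF a(1,2)] d by (simp add: Mrow_simps)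
    next
      assume d: "\<not> d0" "d1"
      then have "pp \<gamma> v i \<noteq> P \<or> ss \<gamma> v j \<noteq> S" using a by (auto simp: Mw split: if_splits)
      then show ?thesis using strict_ps[OF a(1,2)] strict_ps'[OF a(1,2)] d by (auto simp: Mrow_simps)
    next
      assume d: "d0" "\<not> d1"
      then have "(ss \<gamma> v j = S \<and> tV j) \<noteq> (pp \<gamma> v i = P \<and> tU i)" using a by (auto simp: Mw split: if_splits)
      then have "rr \<gamma> v j \<noteq> R \<or> qq \<gamma> v i \<noteq> Q" using nb a(1,2) by blast
      then show ?thesis using strict_rq[OF a(1,2)] strict_rq'[OF a(1,2)] d by (auto simp: Mrow_simps)
    next
      assume d: "d0" "d1"
      then have "\<not> tV j" using a by (auto simp: Mw split: if_splits)
      then show ?thesis using strict_rs[OF a(1,2)] d by (simp add: Mrow_simps)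
    qed
  qed
  then show False using vert by blast
qed

lemma vertex_good: assumes "is_vertex n \<gamma> v" shows "good n \<gamma> v"
  unfolding good_def using live[OF assms] bridge[OF assms] Nu[OF assms] Nv[OF assms] by blast

lemma conv_tight: fixes l b c K :: real
  assumes "0 < l" "l < 1" "b \<le> K" "c \<le> K" "l * b + (1 - l) * c = K" shows "b = K"
proof (rule ccontr)
  assume "b \<noteq> K" then have "b < K" using assms by simp
  then have "l * b < l * K" using assms by simp
  moreover have "(1 - l) * c \<le> (1 - l) * K" using assms by (intro mult_left_mono) auto
  moreover have "l * K + (1 - l) * K = K" by (simp add: algebra_simps)
  ultimately show False using assms(5) by linarith
qed

lemma comb_eq: assumes gd: "good n \<gamma> v" and l: "0 < l" "l < 1" and v1H: "v1 \<in> Hpoly n \<gamma>" and v2H: "v2 \<in> Hpoly n \<gamma>"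
  and cb: "\<forall>y<n. \<forall>d z. v y d z = l * v1 y d z + (1 - l) * v2 y d z"
  shows "Mvec n v1 = Mvec n v"
proof -
  have lv: "P + S = 0" "Q + R = 0" using gd by (auto simp: good_def)
  have Mc: "Mrow v i j d0 d1 = l * Mrow v1 i j d0 d1 + (1 - l) * Mrow v2 i j d0 d1" if "i < n" "j < n" for i j d0 d1
    using cb that by (simp add: Mrow_def algebra_simps)
  have tt: "Mrow v1 i j d0 d1 = Mrow v i j d0 d1" if "i < n" "j < n" "Mrow v i j d0 d1 = \<gamma> j - \<gamma> i" for i j d0 d1
    using conv_tight[OF l, of "Mrow v1 i j d0 d1" "\<gamma> j - \<gamma> i" "Mrow v2 i j d0 d1"] v1H v2H that Mc[OF that(1,2)]
    by (simp add: Hpoly_def)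
  define D where "D = (\<lambda>y d z. v1 y d z - v y d z)"
  have n0: "n - 1 < n" "0 < n" using n1 by auto
  have E1: "D i False False + D j True True = 0" if "i < n" "j < n" "pp \<gamma> v i = P" "ss \<gamma> v j = S" for i j
    using tt[OF that(1,2), of False True] that lv by (simp add: Mrow_simps D_def pp_def ss_def)
  have E2: "D j True False + D i False True = 0" if "i < n" "j < n" "qq \<gamma> v i = Q" "rr \<gamma> v j = R" for i j
    using tt[OF that(1,2), of True False] that lv by (simp add: Mrow_simps D_def qq_def rr_def)
  have E3: "D i False False + D i False True = 0" if "i < n" "tU i" for i
    using tt[OF that(1) n0(2), of False False] that by (simp add: Mrow_simps D_def pp_def qq_def gg_def)
  have E4: "D j True False + D j True True = 0" if "j < n" "tV j" for j
    using tt[OF n0(1) that(1), of True True] that by (simp add: Mrow_simps D_def rr_def ss_def hh_def)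
  obtain i0 where i0: "i0 < n" "pp \<gamma> v i0 = P" using pp_ex by blast
  obtain j0 where j0: "j0 < n" "ss \<gamma> v j0 = S" using ss_ex by blast
  define t where "t = D i0 False False"
  have s1: "D j True True = - t" if "j < n" "ss \<gamma> v j = S" for j using E1[OF i0(1) that(1) i0(2) that(2)] t_def by simp
  have p1: "D i False False = t" if "i < n" "pp \<gamma> v i = P" for i using E1[OF that(1) j0(1) that(2) j0(2)] s1[OF j0] by simp
  have qr: "(\<forall>i<n. qq \<gamma> v i = Q \<longrightarrow> D i False True = - t) \<and> (\<forall>j<n. rr \<gamma> v j = R \<longrightarrow> D j True False = t)"
  proof -
    have br: "(\<exists>i<n. pp \<gamma> v i = P \<and> qq \<gamma> v i = Q \<and> tU i) \<or> (\<exists>j<n. rr \<gamma> v j = R \<and> ss \<gamma> v j = S \<and> tV j)"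
      using gd by (simp add: good_def)
    then show ?thesis
    proof
      assume "\<exists>i<n. pp \<gamma> v i = P \<and> qq \<gamma> v i = Q \<and> tU i"
      then obtain k where k: "k < n" "pp \<gamma> v k = P" "qq \<gamma> v k = Q" "tU k" by blast
      have dk: "D k False True = - t" using E3[OF k(1) k(4)] p1[OF k(1) k(2)] by simp
      have r1: "D j True False = t" if "j < n" "rr \<gamma> v j = R" for j using E2[OF k(1) that(1) k(3) that(2)] dk by simp
      obtain j1 where j1: "j1 < n" "rr \<gamma> v j1 = R" using rr_ex by blast
      have q1: "D i False True = - t" if "i < n" "qq \<gamma> v i = Q" for i using E2[OF that(1) j1(1) that(2) j1(2)] r1[OF j1] by simp
      show ?thesis using r1 q1 by blast
    next
      assume "\<exists>j<n. rr \<gamma> v j = R \<and> ss \<gamma> v j = S \<and> tV j"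
      then obtain k where k: "k < n" "rr \<gamma> v k = R" "ss \<gamma> v k = S" "tV k" by blast
      have dk: "D k True False = t" using E4[OF k(1) k(4)] s1[OF k(1) k(3)] by simp
      have q1: "D i False True = - t" if "i < n" "qq \<gamma> v i = Q" for i using E2[OF that(1) k(1) that(2) k(2)] dk by simp
      obtain i1 where i1: "i1 < n" "qq \<gamma> v i1 = Q" using qq_ex by blast
      have r1: "D j True False = t" if "j < n" "rr \<gamma> v j = R" for j using E2[OF i1(1) that(1) i1(2) that(2)] q1[OF i1] by simp
      show ?thesis using r1 q1 by blast
    qed
  qed
  have gd': "\<forall>i<n. pp \<gamma> v i = P \<or> (tU i \<and> qq \<gamma> v i = Q)" "\<forall>i<n. qq \<gamma> v i = Q \<or> (tU i \<and> pp \<gamma> v i = P)"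
    "\<forall>j<n. rr \<gamma> v j = R \<or> (tV j \<and> ss \<gamma> v j = S)" "\<forall>j<n. ss \<gamma> v j = S \<or> (tV j \<and> rr \<gamma> v j = R)"
    using gd by (auto simp: good_def)
  have A: "D i False False = t" if "i < n" for i
  proof -
    have "pp \<gamma> v i = P \<or> (tU i \<and> qq \<gamma> v i = Q)" using gd'(1) that by blast
    then show ?thesis
    proof
      assume h: "tU i \<and> qq \<gamma> v i = Q"
      have "D i False True = - t" using qr that h by blast
      then show ?thesis using E3[OF that] h by simp
    qed (use p1 that in blast)
  qed
  have B: "D i False True = - t" if "i < n" for i
  proof -
    have "qq \<gamma> v i = Q \<or> (tU i \<and> pp \<gamma> v i = P)" using gd'(2) that by blast
    then show ?thesis
    proof
      assume h: "tU i \<and> pp \<gamma> v i = P"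
      have "D i False False = t" using p1 that h by blast
      then show ?thesis using E3[OF that] h by simp
    qed (use qr that in blast)
  qed
  have C: "D j True False = t" if "j < n" for j
  proof -
    have "rr \<gamma> v j = R \<or> (tV j \<and> ss \<gamma> v j = S)" using gd'(3) that by blast
    then show ?thesis
    proof
      assume h: "tV j \<and> ss \<gamma> v j = S"
      have "D j True True = - t" using s1 that h by blast
      then show ?thesis using E4[OF that] h by simp
    qed (use qr that in blast)
  qed
  have Dd: "D j True True = - t" if "j < n" for j
  proof -
    have "ss \<gamma> v j = S \<or> (tV j \<and> rr \<gamma> v j = R)" using gd'(4) that by blast
    then show ?thesis
    proof
      assume h: "tV j \<and> rr \<gamma> v j = R"
      have "D j True False = t" using qr that h by blast
      then show ?thesis using E4[OF that] h by simp
    qed (use s1 that in blast)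
  qed
  show ?thesis
  proof (rule ext, clarify)
    fix i j d0 d1
    show "Mvec n v1 (i, j, d0, d1) = Mvec n v (i, j, d0, d1)"
    proof (cases "i < n \<and> j < n")
      case True
      then have "v1 i False False = v i False False + t" "v1 i False True = v i False True - t"
        "v1 j True False = v j True False + t" "v1 j True True = v j True True - t"
        using A[of i] B[of i] C[of j] Dd[of j] by (auto simp: D_def)
      then show ?thesis using True by (cases d0; cases d1; simp add: Mvec_def Mrow_simps)
    qed (auto simp: Mvec_def)
  qed
qed

lemma good_vertex: assumes "good n \<gamma> v" shows "is_vertex n \<gamma> v"
  unfolding is_vertex_def
proof (intro conjI allI impI vH)
  fix v1 v2 and l :: real
  assume a: "0 < l \<and> l < 1 \<and> v1 \<in> Hpoly n \<gamma> \<and> v2 \<in> Hpoly n \<gamma> \<and> (\<forall>y<n. \<forall>d z. v y d z = l * v1 y d z + (1 - l) * v2 y d z)"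
  show "Mvec n v1 = Mvec n v" using comb_eq[OF assms, of l v1 v2] a by blast
  have "\<forall>y<n. \<forall>d z. v y d z = (1 - l) * v2 y d z + (1 - (1 - l)) * v1 y d z" using a by simp
  then show "Mvec n v2 = Mvec n v" using comb_eq[OF assms, of "1 - l" v2 v1] a by simp
qed

lemma vertex_iff_good: "is_vertex n \<gamma> v \<longleftrightarrow> good n \<gamma> v"
  using vertex_good good_vertex by blast

end
end

definition sig :: "nat \<Rightarrow> (nat \<Rightarrow> real) \<Rightarrow> (nat \<Rightarrow> bool \<Rightarrow> bool \<Rightarrow> real) \<Rightarrow> nat \<Rightarrow> bool \<Rightarrow> bool \<Rightarrow> bool" where
  "sig n \<gamma> v = (\<lambda>y d z. y < n \<and> (if d then (if z then ss \<gamma> v y = SM n \<gamma> v else rr \<gamma> v y = RM n \<gamma> v)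
      else (if z then qq \<gamma> v y = QM n \<gamma> v else pp \<gamma> v y = PM n \<gamma> v)))"

definition adm :: "nat \<Rightarrow> (nat \<Rightarrow> real) \<Rightarrow> (nat \<Rightarrow> bool \<Rightarrow> bool \<Rightarrow> bool) \<Rightarrow> real \<Rightarrow> bool" where
  "adm n \<gamma> B \<kappa> \<longleftrightarrow>
    (\<forall>i<n. B i False False \<or> B i False True) \<and> (\<forall>j<n. B j True False \<or> B j True True) \<and>
    (\<forall>i<n. (B i False False \<and> B i False True) \<longleftrightarrow> \<kappa> \<le> gg \<gamma> i) \<and>
    (\<forall>j<n. (B j True False \<and> B j True True) \<longleftrightarrow> - hh n \<gamma> j \<le> \<kappa>) \<and>
    (\<exists>i<n. B i False False) \<and> (\<exists>i<n. B i False True) \<and> (\<exists>j<n. B j True False) \<and> (\<exists>j<n. B j True True) \<and>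
    ((\<exists>i<n. \<kappa> = gg \<gamma> i) \<or> (\<exists>j<n. \<kappa> = - hh n \<gamma> j))"

lemma max_char: fixes f :: "nat \<Rightarrow> real"
  assumes "\<And>i. i < n \<Longrightarrow> f i \<le> c" "i0 < n" "f i0 = c"
  shows "Max (f ` {..<n}) = c"
  using assms by (intro Max_eqI) force+

context
  fixes n :: nat and \<gamma> :: "nat \<Rightarrow> real"
  assumes n1: "1 \<le> n"
    and gmono: "\<And>i j. i < j \<Longrightarrow> j < n \<Longrightarrow> \<gamma> i < \<gamma> j"
begin

lemma gle2: "i \<le> j \<Longrightarrow> j < n \<Longrightarrow> \<gamma> i \<le> \<gamma> j"
  using gmono by (cases "i = j") (auto simp: order_le_less)

lemma gg_less_iff: "i < n \<Longrightarrow> j < n \<Longrightarrow> gg \<gamma> i < gg \<gamma> j \<longleftrightarrow> i < j"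
  using gmono[of i j] gmono[of j i] by (auto simp: gg_def) (metis linorder_neqE_nat not_less_iff_gr_or_eq)
lemma gg_le_iff: "i < n \<Longrightarrow> j < n \<Longrightarrow> gg \<gamma> i \<le> gg \<gamma> j \<longleftrightarrow> i \<le> j"
  using gg_less_iff[of j i] by (auto simp: not_less[symmetric])
lemma hh_less_iff: "i < n \<Longrightarrow> j < n \<Longrightarrow> - hh n \<gamma> i < - hh n \<gamma> j \<longleftrightarrow> i < j"
  using gmono[of i j] gmono[of j i] by (auto simp: hh_def) (metis linorder_neqE_nat not_less_iff_gr_or_eq)
lemma hh_le_iff: "i < n \<Longrightarrow> j < n \<Longrightarrow> - hh n \<gamma> i \<le> - hh n \<gamma> j \<longleftrightarrow> i \<le> j"
  using hh_less_iff[of j i] by (auto simp: not_less[symmetric])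
lemma gg_last: "gg \<gamma> (n - 1) = - hh n \<gamma> 0" by (simp add: gg_def hh_def)
lemma gg_le_hh: "i < n \<Longrightarrow> j < n \<Longrightarrow> gg \<gamma> i \<le> - hh n \<gamma> j"
  using gg_le_iff[of i "n - 1"] hh_le_iff[of 0 j] gg_last n1 by auto

lemma adm_unique: assumes "adm n \<gamma> B k1" "adm n \<gamma> B k2" shows "k1 = k2"
proof -
  have up: "k' \<le> k" if "adm n \<gamma> B k" "adm n \<gamma> B k'" "\<exists>i<n. k = gg \<gamma> i" for k k'
    using that unfolding adm_def by (metis order_refl)
  have dn: "k \<le> k'" if "adm n \<gamma> B k" "adm n \<gamma> B k'" "\<exists>j<n. k = - hh n \<gamma> j" for k k'
    using that unfolding adm_def by (metis order_refl)
  have mix: "k \<le> k'" if "\<exists>i<n. k = gg \<gamma> i" "\<exists>j<n. k' = - hh n \<gamma> j" for k k'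
    using that gg_le_hh by blast
  have b1: "(\<exists>i<n. k1 = gg \<gamma> i) \<or> (\<exists>j<n. k1 = - hh n \<gamma> j)" using assms(1) by (simp add: adm_def)
  have b2: "(\<exists>i<n. k2 = gg \<gamma> i) \<or> (\<exists>j<n. k2 = - hh n \<gamma> j)" using assms(2) by (simp add: adm_def)
  from b1 b2 show ?thesis
    using up[OF assms(1,2)] up[OF assms(2,1)] dn[OF assms(1,2)] dn[OF assms(2,1)] mix[of k1 k2] mix[of k2 k1]
    by (metis order.antisym)
qed

lemma good_adm: assumes vH: "v \<in> Hpoly n \<gamma>" and gd: "good n \<gamma> v"
  shows "adm n \<gamma> (sig n \<gamma> v) (PM n \<gamma> v + QM n \<gamma> v)"
proof -
  note G = gd[unfolded good_def]
  have H: "\<forall>i<n. pp \<gamma> v i + qq \<gamma> v i \<le> gg \<gamma> i" "\<forall>j<n. rr \<gamma> v j + ss \<gamma> v j \<le> hh n \<gamma> j"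
    using vH H_iff[of n \<gamma> v, OF n1 gmono] by blast+
  have le: "pp \<gamma> v i \<le> PM n \<gamma> v" "qq \<gamma> v i \<le> QM n \<gamma> v" "rr \<gamma> v i \<le> RM n \<gamma> v" "ss \<gamma> v i \<le> SM n \<gamma> v" if "i < n" for i
    using that by (simp_all add: PM_def QM_def RM_def SM_def)
  have ex: "\<exists>i<n. pp \<gamma> v i = PM n \<gamma> v" "\<exists>i<n. qq \<gamma> v i = QM n \<gamma> v" "\<exists>i<n. rr \<gamma> v i = RM n \<gamma> v" "\<exists>i<n. ss \<gamma> v i = SM n \<gamma> v"
    using pp_ex[OF n1 gmono] qq_ex[OF n1 gmono] rr_ex[OF n1 gmono] ss_ex[OF n1 gmono] by auto
  show ?thesis unfolding adm_def
  proof (intro conjI allI impI)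
    fix i assume i: "i < n"
    show "sig n \<gamma> v i False False \<or> sig n \<gamma> v i False True" using G i by (auto simp: sig_def)
    show "(sig n \<gamma> v i False False \<and> sig n \<gamma> v i False True) = (PM n \<gamma> v + QM n \<gamma> v \<le> gg \<gamma> i)"
      using G i H le[OF i] by (auto simp: sig_def; smt (verit))
  next
    fix j assume j: "j < n"
    show "sig n \<gamma> v j True False \<or> sig n \<gamma> v j True True" using G j by (auto simp: sig_def)
    show "(sig n \<gamma> v j True False \<and> sig n \<gamma> v j True True) = (- hh n \<gamma> j \<le> PM n \<gamma> v + QM n \<gamma> v)"
      using G j H le[OF j] by (auto simp: sig_def; smt (verit))
  next
    show "\<exists>i<n. sig n \<gamma> v i False False" "\<exists>i<n. sig n \<gamma> v i False True"
      "\<exists>j<n. sig n \<gamma> v j True False" "\<exists>j<n. sig n \<gamma> v j True True"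
      using ex by (auto simp: sig_def)
    show "(\<exists>i<n. PM n \<gamma> v + QM n \<gamma> v = gg \<gamma> i) \<or> (\<exists>j<n. PM n \<gamma> v + QM n \<gamma> v = - hh n \<gamma> j)"
      using G by (smt (verit))
  qed
qed

lemma Hi: "v \<in> Hpoly n \<gamma> \<longleftrightarrow>
   (\<forall>i<n. pp \<gamma> v i + qq \<gamma> v i \<le> gg \<gamma> i) \<and>
   (\<forall>i<n. \<forall>j<n. pp \<gamma> v i + ss \<gamma> v j \<le> 0) \<and>
   (\<forall>i<n. \<forall>j<n. rr \<gamma> v j + qq \<gamma> v i \<le> 0) \<and>
   (\<forall>j<n. rr \<gamma> v j + ss \<gamma> v j \<le> hh n \<gamma> j)"
  by (rule H_iff) (use n1 gmono in auto)

lemma adm_good: assumes ad: "adm n \<gamma> B \<kappa>" and arr: "B \<in> arrays n"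
  shows "\<exists>v. v \<in> Hpoly n \<gamma> \<and> good n \<gamma> v \<and> sig n \<gamma> v = B"
proof -
  define v where "v = (\<lambda>y d z. if d then (if z then (if B y True True then 0 else hh n \<gamma> y + \<kappa>) + \<gamma> y
      else (if B y True False then - \<kappa> else hh n \<gamma> y) + \<gamma> y)
      else (if z then (if B y False True then \<kappa> else gg \<gamma> y) - \<gamma> y
      else (if B y False False then 0 else gg \<gamma> y - \<kappa>) - \<gamma> y))"
  have pv: "pp \<gamma> v i = (if B i False False then 0 else gg \<gamma> i - \<kappa>)" for i by (simp add: pp_def v_def)
  have qv: "qq \<gamma> v i = (if B i False True then \<kappa> else gg \<gamma> i)" for i by (simp add: qq_def v_def)
  have rv: "rr \<gamma> v i = (if B i True False then - \<kappa> else hh n \<gamma> i)" for i by (simp add: rr_def v_def)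
  have sv: "ss \<gamma> v i = (if B i True True then 0 else hh n \<gamma> i + \<kappa>)" for i by (simp add: ss_def v_def)
  note A = ad[unfolded adm_def]
  have ua: "B i False False \<or> B i False True" if "i < n" for i using A that by blast
  have va: "B i True False \<or> B i True True" if "i < n" for i using A that by blast
  have ub: "(B i False False \<and> B i False True) \<longleftrightarrow> \<kappa> \<le> gg \<gamma> i" if "i < n" for i using A that by blast
  have vb: "(B i True False \<and> B i True True) \<longleftrightarrow> - hh n \<gamma> i \<le> \<kappa>" if "i < n" for i using A that by blast
  have p_le: "pp \<gamma> v i \<le> 0" "pp \<gamma> v i = 0 \<longleftrightarrow> B i False False" if "i < n" for i
    using ua[OF that] ub[OF that] by (auto simp: pv)
  have q_le: "qq \<gamma> v i \<le> \<kappa>" "qq \<gamma> v i = \<kappa> \<longleftrightarrow> B i False True" if "i < n" for i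
    using ua[OF that] ub[OF that] by (auto simp: qv)
  have r_le: "rr \<gamma> v i \<le> - \<kappa>" "rr \<gamma> v i = - \<kappa> \<longleftrightarrow> B i True False" if "i < n" for i
    using va[OF that] vb[OF that] by (auto simp: rv)
  have s_le: "ss \<gamma> v i \<le> 0" "ss \<gamma> v i = 0 \<longleftrightarrow> B i True True" if "i < n" for i
    using va[OF that] vb[OF that] by (auto simp: sv)
  obtain i1 where i1: "i1 < n" "B i1 False False" using A by blast
  obtain i2 where i2: "i2 < n" "B i2 False True" using A by blast
  obtain i3 where i3: "i3 < n" "B i3 True False" using A by blast
  obtain i4 where i4: "i4 < n" "B i4 True True" using A by blast
  have PM: "PM n \<gamma> v = 0" unfolding PM_def using p_le i1 by (intro max_char[of _ _ _ i1]) auto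
  have QM: "QM n \<gamma> v = \<kappa>" unfolding QM_def using q_le i2 by (intro max_char[of _ _ _ i2]) auto
  have RM: "RM n \<gamma> v = - \<kappa>" unfolding RM_def using r_le i3 by (intro max_char[of _ _ _ i3]) auto
  have SM: "SM n \<gamma> v = 0" unfolding SM_def using s_le i4 by (intro max_char[of _ _ _ i4]) auto
  have vH: "v \<in> Hpoly n \<gamma>"
  proof (rule iffD2[OF Hi], intro conjI allI impI)
    fix i assume i: "i < n"
    show "pp \<gamma> v i + qq \<gamma> v i \<le> gg \<gamma> i" using ua[OF i] ub[OF i] by (auto simp: pv qv)
    show "rr \<gamma> v i + ss \<gamma> v i \<le> hh n \<gamma> i" using va[OF i] vb[OF i] by (auto simp: rv sv)
  next
    fix i j assume i: "i < n" and j: "j < n"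
    show "pp \<gamma> v i + ss \<gamma> v j \<le> 0" using p_le[OF i] s_le[OF j] by linarith
    show "rr \<gamma> v j + qq \<gamma> v i \<le> 0" using r_le[OF j] q_le[OF i] by linarith
  qed
  have gd: "good n \<gamma> v"
    unfolding good_def PM QM RM SM
  proof (intro conjI allI impI)
    show "(0::real) + 0 = 0" "\<kappa> + - \<kappa> = 0" by simp_all
  next
    fix i assume i: "i < n"
    show "pp \<gamma> v i = 0 \<or> pp \<gamma> v i + qq \<gamma> v i = gg \<gamma> i \<and> qq \<gamma> v i = \<kappa>"
      using ua[OF i] by (auto simp: pv qv)
    show "qq \<gamma> v i = \<kappa> \<or> pp \<gamma> v i + qq \<gamma> v i = gg \<gamma> i \<and> pp \<gamma> v i = 0"
      using ua[OF i] by (auto simp: pv qv)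
    show "rr \<gamma> v i = - \<kappa> \<or> rr \<gamma> v i + ss \<gamma> v i = hh n \<gamma> i \<and> ss \<gamma> v i = 0"
      using va[OF i] by (auto simp: rv sv)
    show "ss \<gamma> v i = 0 \<or> rr \<gamma> v i + ss \<gamma> v i = hh n \<gamma> i \<and> rr \<gamma> v i = - \<kappa>"
      using va[OF i] by (auto simp: rv sv)
  next
    have "(\<exists>i<n. \<kappa> = gg \<gamma> i) \<or> (\<exists>j<n. \<kappa> = - hh n \<gamma> j)" using A by blast
    then show "(\<exists>i<n. pp \<gamma> v i = 0 \<and> qq \<gamma> v i = \<kappa> \<and> pp \<gamma> v i + qq \<gamma> v i = gg \<gamma> i) \<or>
      (\<exists>j<n. rr \<gamma> v j = - \<kappa> \<and> ss \<gamma> v j = 0 \<and> rr \<gamma> v j + ss \<gamma> v j = hh n \<gamma> j)"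
    proof
      assume "\<exists>i<n. \<kappa> = gg \<gamma> i"
      then obtain i where i: "i < n" "\<kappa> = gg \<gamma> i" by blast
      then have "B i False False" "B i False True" using ub[OF i(1)] by auto
      then show ?thesis using i by (auto simp: pv qv)
    next
      assume "\<exists>j<n. \<kappa> = - hh n \<gamma> j"
      then obtain j where j: "j < n" "\<kappa> = - hh n \<gamma> j" by blast
      then have "B j True False" "B j True True" using vb[OF j(1)] by auto
      then show ?thesis using j by (auto simp: rv sv)
    qed
  qed
  have sg: "sig n \<gamma> v = B"
  proof (intro ext)
    fix y d z
    show "sig n \<gamma> v y d z = B y d z"
    proof (cases "y < n")
      case True
      then show ?thesis using p_le[OF True] q_le[OF True] r_le[OF True] s_le[OF True]
        by (cases d; cases z; simp add: sig_def PM QM RM SM)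
    next
      case False
      then show ?thesis using arr by (simp add: sig_def arrays_def)
    qed
  qed
  show ?thesis using vH gd sg by blast
qed


lemma pp_ex4: "\<exists>i<n. pp \<gamma> v i = PM n \<gamma> v" by (rule pp_ex) (use n1 gmono in auto)
lemma qq_ex4: "\<exists>i<n. qq \<gamma> v i = QM n \<gamma> v" by (rule qq_ex) (use n1 gmono in auto)
lemma rr_ex4: "\<exists>i<n. rr \<gamma> v i = RM n \<gamma> v" by (rule rr_ex) (use n1 gmono in auto)
lemma ss_ex4: "\<exists>i<n. ss \<gamma> v i = SM n \<gamma> v" by (rule ss_ex) (use n1 gmono in auto)

lemma S_adm: assumes "B \<in> Ssig n" shows "\<exists>\<kappa>. adm n \<gamma> B \<kappa>"
proof -
  have n0: "n - 1 < n" "0 < n" using n1 by auto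
  consider "B \<in> S1 n" | "B \<in> S2 n" | "B \<in> S3 n" using assms by (auto simp: Ssig_def)
  then show ?thesis
  proof cases
    case 1
    then obtain t where t: "t + 2 \<le> n" and U1: "\<forall>i. t \<le> i \<and> i < n \<longrightarrow> B i False False \<and> B i False True"
      and U2: "\<forall>i<t. B i False False \<noteq> B i False True" and V: "\<forall>i<n. B i True False \<noteq> B i True True"
      and Ex: "\<exists>i<n. \<exists>j<n. B i True False \<and> B j True True" by (auto simp: S1_def)
    have tn: "t < n" "t < n - 1" using t by auto
    have "adm n \<gamma> B (gg \<gamma> t)" unfolding adm_def
    proof (intro conjI allI impI)
      fix i assume i: "i < n"
      show "B i False False \<or> B i False True" using U1 U2 i by (cases "i < t") auto
      show "B i True False \<or> B i True True" using V i by auto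
      show "(B i False False \<and> B i False True) = (gg \<gamma> t \<le> gg \<gamma> i)"
        using U1 U2 i gg_le_iff[OF tn(1) i] by (cases "i < t") auto
      have "gg \<gamma> t < - hh n \<gamma> i" using gg_less_iff[OF tn(1) n0(1)] tn gg_last gg_le_hh[OF n0(1) i] by simp
      then show "(B i True False \<and> B i True True) = (- hh n \<gamma> i \<le> gg \<gamma> t)" using V i by auto
    next
      show "\<exists>i<n. B i False False" "\<exists>i<n. B i False True" using U1 tn by auto
      show "\<exists>j<n. B j True False" "\<exists>j<n. B j True True" using Ex by auto
      show "(\<exists>i<n. gg \<gamma> t = gg \<gamma> i) \<or> (\<exists>j<n. gg \<gamma> t = - hh n \<gamma> j)" using tn by auto
    qed
    then show ?thesis by blast
  next
    case 2
    then have a: "B (n - 1) False False" "B (n - 1) False True" "B 0 True False" "B 0 True True"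
      and U: "\<forall>i. i < n - 1 \<longrightarrow> B i False False \<noteq> B i False True"
      and V: "\<forall>j. 0 < j \<and> j < n \<longrightarrow> B j True False \<noteq> B j True True" by (auto simp: S2_def)
    have "adm n \<gamma> B (gg \<gamma> (n - 1))" unfolding adm_def
    proof (intro conjI allI impI)
      fix i assume i: "i < n"
      have "i < n - 1 \<or> i = n - 1" using i by auto
      then show "B i False False \<or> B i False True" using U a by auto
      show "B i True False \<or> B i True True" using V a i by (cases "0 < i") auto
      show "(B i False False \<and> B i False True) = (gg \<gamma> (n - 1) \<le> gg \<gamma> i)"
        using U a i gg_le_iff[OF n0(1) i] \<open>i < n - 1 \<or> i = n - 1\<close> by auto
      show "(B i True False \<and> B i True True) = (- hh n \<gamma> i \<le> gg \<gamma> (n - 1))"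
        using V a i hh_le_iff[OF i n0(2)] gg_last by (cases "0 < i") auto
    next
      show "\<exists>i<n. B i False False" "\<exists>i<n. B i False True" "\<exists>j<n. B j True False" "\<exists>j<n. B j True True"
        using a n0 by blast+
      show "(\<exists>i<n. gg \<gamma> (n - 1) = gg \<gamma> i) \<or> (\<exists>j<n. gg \<gamma> (n - 1) = - hh n \<gamma> j)" using n0(1) by blast
    qed
    then show ?thesis by blast
  next
    case 3
    then obtain t where t: "1 \<le> t" "t + 1 \<le> n" and V1: "\<forall>i\<le>t. B i True False \<and> B i True True"
      and V2: "\<forall>i. t < i \<and> i < n \<longrightarrow> B i True False \<noteq> B i True True"
      and U: "\<forall>i<n. B i False False \<noteq> B i False True"
      and Ex: "\<exists>i<n. \<exists>j<n. B i False False \<and> B j False True" by (auto simp: S3_def)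
    have tn: "t < n" "0 < t" using t by auto
    have "adm n \<gamma> B (- hh n \<gamma> t)" unfolding adm_def
    proof (intro conjI allI impI)
      fix i assume i: "i < n"
      show "B i False False \<or> B i False True" using U i by auto
      show "B i True False \<or> B i True True" using V1 V2 i by (cases "i \<le> t") auto
      have g1: "gg \<gamma> i \<le> gg \<gamma> (n - 1)" using gg_le_iff[OF i n0(1)] i by auto
      have g2: "- hh n \<gamma> 0 < - hh n \<gamma> t" using hh_less_iff[OF n0(2) tn(1)] tn by auto
      have "gg \<gamma> i < - hh n \<gamma> t" using g1 g2 gg_last by linarith
      then show "(B i False False \<and> B i False True) = (- hh n \<gamma> t \<le> gg \<gamma> i)" using U i by auto
      show "(B i True False \<and> B i True True) = (- hh n \<gamma> i \<le> - hh n \<gamma> t)"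
        using V1 V2 i hh_le_iff[OF i tn(1)] by (cases "i \<le> t") auto
    next
      show "\<exists>i<n. B i False False" "\<exists>i<n. B i False True" using Ex by auto
      show "\<exists>j<n. B j True False" "\<exists>j<n. B j True True" using V1 n0 by auto
      show "(\<exists>i<n. - hh n \<gamma> t = gg \<gamma> i) \<or> (\<exists>j<n. - hh n \<gamma> t = - hh n \<gamma> j)" using tn by auto
    qed
    then show ?thesis by blast
  qed
qed

lemma adm_S: assumes ad: "adm n \<gamma> B \<kappa>" and arr: "B \<in> arrays n" shows "B \<in> Ssig n"
proof -
  have n0: "n - 1 < n" "0 < n" using n1 by auto
  note A = ad[unfolded adm_def]
  have ua: "B i False False \<or> B i False True" if "i < n" for i using A that by blast
  have va: "B i True False \<or> B i True True" if "i < n" for i using A that by blast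
  have ub: "(B i False False \<and> B i False True) \<longleftrightarrow> \<kappa> \<le> gg \<gamma> i" if "i < n" for i using A that by blast
  have vb: "(B i True False \<and> B i True True) \<longleftrightarrow> - hh n \<gamma> i \<le> \<kappa>" if "i < n" for i using A that by blast
  have ex: "\<exists>i<n. B i False False" "\<exists>i<n. B i False True" "\<exists>j<n. B j True False" "\<exists>j<n. B j True True"
    using A by blast+
  have s2: "B \<in> S2 n" if k: "\<kappa> = gg \<gamma> (n - 1)"
    unfolding S2_def
  proof (intro CollectI conjI allI impI arr)
    show "B (n - 1) False False" "B (n - 1) False True" using ub[OF n0(1)] k by auto
    show "B 0 True False" "B 0 True True" using vb[OF n0(2)] k gg_last by auto
  next
    fix i assume i: "i < n - 1"
    then have iN: "i < n" by auto
    then have "\<not> \<kappa> \<le> gg \<gamma> i" using k gg_less_iff[of i "n - 1"] n0 i by auto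
    then show "B i False False \<noteq> B i False True" using ua[OF iN] ub[OF iN] by auto
  next
    fix j assume j: "0 < j \<and> j < n"
    then have "\<not> - hh n \<gamma> j \<le> \<kappa>" using k gg_last hh_less_iff[of 0 j] n0 by auto
    then show "B j True False \<noteq> B j True True" using va[of j] vb[of j] j by auto
  qed
  have "(\<exists>i<n. \<kappa> = gg \<gamma> i) \<or> (\<exists>j<n. \<kappa> = - hh n \<gamma> j)" using A by blast
  then show ?thesis
  proof
    assume "\<exists>i<n. \<kappa> = gg \<gamma> i"
    then obtain t where t: "t < n" "\<kappa> = gg \<gamma> t" by blast
    show ?thesis
    proof (cases "t = n - 1")
      case True then show ?thesis using s2 t by (simp add: Ssig_def)
    next
      case False
      then have tl: "t < n - 1" using t by auto
      have "B \<in> S1 n" unfolding S1_def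
      proof (intro CollectI conjI arr, rule exI[of _ t], intro conjI allI impI)
        show "t + 2 \<le> n" using tl by auto
      next
        fix i assume i: "t \<le> i \<and> i < n"
        then show "B i False False" "B i False True" using ub[of i] t gg_le_iff[of t i] by auto
      next
        fix i assume i: "i < t"
        then have "\<not> \<kappa> \<le> gg \<gamma> i" using t gg_less_iff[of i t] by auto
        then show "B i False False \<noteq> B i False True" using ua[of i] ub[of i] i t by auto
      next
        fix j assume j: "j < n"
        have "gg \<gamma> t < - hh n \<gamma> j" using gg_less_iff[OF t(1) n0(1)] tl gg_last gg_le_hh[OF n0(1) j] by simp
        then show "B j True False \<noteq> B j True True" using va[OF j] vb[OF j] t by auto
      next
        show "\<exists>i<n. \<exists>j<n. B i True False \<and> B j True True" using ex by blast
      qed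
      then show ?thesis by (simp add: Ssig_def)
    qed
  next
    assume "\<exists>j<n. \<kappa> = - hh n \<gamma> j"
    then obtain t where t: "t < n" "\<kappa> = - hh n \<gamma> t" by blast
    show ?thesis
    proof (cases "t = 0")
      case True then show ?thesis using s2 t gg_last by (simp add: Ssig_def)
    next
      case False
      then have tp: "0 < t" by auto
      have "B \<in> S3 n" unfolding S3_def
      proof (intro CollectI conjI arr, rule exI[of _ t], intro conjI allI impI)
        show "1 \<le> t" "t + 1 \<le> n" using tp t by auto
      next
        fix i assume i: "i \<le> t"
        then show "B i True False" "B i True True" using vb[of i] t hh_le_iff[of i t] by auto
      next
        fix i assume i: "t < i \<and> i < n"
        then have "\<not> - hh n \<gamma> i \<le> \<kappa>" using t hh_less_iff[of t i] by auto
        then show "B i True False \<noteq> B i True True" using va[of i] vb[of i] i by auto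
      next
        fix i assume i: "i < n"
        have g1: "gg \<gamma> i \<le> gg \<gamma> (n - 1)" using gg_le_iff[OF i n0(1)] i by auto
        have g2: "- hh n \<gamma> 0 < - hh n \<gamma> t" using hh_less_iff[OF n0(2) t(1)] tp by auto
        have "gg \<gamma> i < - hh n \<gamma> t" using g1 g2 gg_last by linarith
        then show "B i False False \<noteq> B i False True" using ua[OF i] ub[OF i] t by auto
      next
        show "\<exists>i<n. \<exists>j<n. B i False False \<and> B j False True" using ex by blast
      qed
      then show ?thesis by (simp add: Ssig_def)
    qed
  qed
qed

lemma sig_arr: "sig n \<gamma> v \<in> arrays n" by (simp add: sig_def arrays_def)

lemma good_val: assumes gd: "good n \<gamma> v" and i: "i < n"
  shows "pp \<gamma> v i = (if pp \<gamma> v i = PM n \<gamma> v then PM n \<gamma> v else gg \<gamma> i - QM n \<gamma> v)"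
    "qq \<gamma> v i = (if qq \<gamma> v i = QM n \<gamma> v then QM n \<gamma> v else gg \<gamma> i - PM n \<gamma> v)"
    "rr \<gamma> v i = (if rr \<gamma> v i = RM n \<gamma> v then RM n \<gamma> v else hh n \<gamma> i - SM n \<gamma> v)"
    "ss \<gamma> v i = (if ss \<gamma> v i = SM n \<gamma> v then SM n \<gamma> v else hh n \<gamma> i - RM n \<gamma> v)"
  using gd i unfolding good_def by (auto; smt (verit))+

lemma sig_mvec: assumes H1: "v1 \<in> Hpoly n \<gamma>" and H2: "v2 \<in> Hpoly n \<gamma>" and g1: "good n \<gamma> v1" and g2: "good n \<gamma> v2"
  and sg: "sig n \<gamma> v1 = sig n \<gamma> v2"
  shows "Mvec n v1 = Mvec n v2"
proof -
  have ke: "PM n \<gamma> v1 + QM n \<gamma> v1 = PM n \<gamma> v2 + QM n \<gamma> v2"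
    using adm_unique[OF good_adm[OF H1 g1] good_adm[OF H2 g2, folded sg]] .
  have l1: "PM n \<gamma> v1 + SM n \<gamma> v1 = 0" "QM n \<gamma> v1 + RM n \<gamma> v1 = 0" using g1 by (auto simp: good_def)
  have l2: "PM n \<gamma> v2 + SM n \<gamma> v2 = 0" "QM n \<gamma> v2 + RM n \<gamma> v2 = 0" using g2 by (auto simp: good_def)
  define t where "t = PM n \<gamma> v1 - PM n \<gamma> v2"
  have sgi: "sig n \<gamma> v1 i d z = sig n \<gamma> v2 i d z" for i d z using sg by simp
  have pd: "pp \<gamma> v1 i = pp \<gamma> v2 i + t" if i: "i < n" for i
    using good_val(1)[OF g1 i] good_val(1)[OF g2 i] sgi[of i False False] i ke unfolding t_def sig_def
    by (auto split: if_splits)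
  have qd: "qq \<gamma> v1 i = qq \<gamma> v2 i - t" if i: "i < n" for i
    using good_val(2)[OF g1 i] good_val(2)[OF g2 i] sgi[of i False True] i ke unfolding t_def sig_def
    by (auto split: if_splits)
  have rd: "rr \<gamma> v1 i = rr \<gamma> v2 i + t" if i: "i < n" for i
    using good_val(3)[OF g1 i] good_val(3)[OF g2 i] sgi[of i True False] i ke l1 l2 unfolding t_def sig_def
    by (auto split: if_splits)
  have sd: "ss \<gamma> v1 i = ss \<gamma> v2 i - t" if i: "i < n" for i
    using good_val(4)[OF g1 i] good_val(4)[OF g2 i] sgi[of i True True] i ke l1 l2 unfolding t_def sig_def
    by (auto split: if_splits)
  show ?thesis
  proof (rule ext, clarify)
    fix i j d0 d1
    show "Mvec n v1 (i, j, d0, d1) = Mvec n v2 (i, j, d0, d1)"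
    proof (cases "i < n \<and> j < n")
      case True
      then show ?thesis using pd[of i] qd[of i] rd[of j] sd[of j]
        by (cases d0; cases d1; simp add: Mvec_def Mrow_simps pp_def qq_def rr_def ss_def)
    qed (auto simp: Mvec_def)
  qed
qed

lemma mvec_sig: assumes M: "Mvec n v1 = Mvec n v2" shows "sig n \<gamma> v1 = sig n \<gamma> v2"
proof -
  have n0: "0 < n" using n1 by auto
  have Me: "Mrow v1 i j d0 d1 = Mrow v2 i j d0 d1" if "i < n" "j < n" for i j d0 d1
    using fun_cong[OF M, of "(i, j, d0, d1)"] that by (simp add: Mvec_def)
  define t where "t = v1 0 False False - v2 0 False False"
  have e: "v1 j True True = v2 j True True - t" if "j < n" for j
    using Me[OF n0 that, of False True] unfolding t_def by (simp add: Mrow_simps)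
  have a: "v1 i False False = v2 i False False + t" if "i < n" for i
    using Me[OF that n0, of False True] e[OF n0] by (simp add: Mrow_simps)
  have b: "v1 i False True = v2 i False True - t" if "i < n" for i
    using Me[OF that n0, of False False] a[OF that] by (simp add: Mrow_simps)
  have c: "v1 j True False = v2 j True False + t" if "j < n" for j
    using Me[OF n0 that, of True False] b[OF n0] by (simp add: Mrow_simps)
  have PM: "PM n \<gamma> v1 = PM n \<gamma> v2 + t"
  proof -
    obtain i0 where "i0 < n" "pp \<gamma> v2 i0 = PM n \<gamma> v2" using pp_ex4 by blast
    then show ?thesis unfolding PM_def[of n \<gamma> v1]
      by (intro max_char[of _ _ _ i0]) (auto simp: a pp_def PM_def add.commute add.left_commute)
  qed
  have QM: "QM n \<gamma> v1 = QM n \<gamma> v2 - t"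
  proof -
    obtain i0 where "i0 < n" "qq \<gamma> v2 i0 = QM n \<gamma> v2" using qq_ex4 by blast
    then show ?thesis unfolding QM_def[of n \<gamma> v1]
      by (intro max_char[of _ _ _ i0]) (auto simp: b qq_def QM_def)
  qed
  have RM: "RM n \<gamma> v1 = RM n \<gamma> v2 + t"
  proof -
    obtain i0 where "i0 < n" "rr \<gamma> v2 i0 = RM n \<gamma> v2" using rr_ex4 by blast
    then show ?thesis unfolding RM_def[of n \<gamma> v1]
      by (intro max_char[of _ _ _ i0]) (auto simp: c rr_def RM_def)
  qed
  have SM: "SM n \<gamma> v1 = SM n \<gamma> v2 - t"
  proof -
    obtain i0 where "i0 < n" "ss \<gamma> v2 i0 = SM n \<gamma> v2" using ss_ex4 by blast
    then show ?thesis unfolding SM_def[of n \<gamma> v1]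
      by (intro max_char[of _ _ _ i0]) (auto simp: e ss_def SM_def)
  qed
  show ?thesis
  proof (intro ext)
    fix y d z
    show "sig n \<gamma> v1 y d z = sig n \<gamma> v2 y d z"
    proof (cases "y < n")
      case True
      then show ?thesis using a[OF True] b[OF True] c[OF True] e[OF True] PM QM RM SM
        by (cases d; cases z; simp add: sig_def pp_def qq_def rr_def ss_def)
    qed (simp add: sig_def)
  qed
qed

end

definition box :: "nat \<Rightarrow> (nat \<Rightarrow> (bool \<times> bool) set) \<Rightarrow> (nat \<Rightarrow> (bool \<times> bool) set) \<Rightarrow> (nat \<Rightarrow> bool \<Rightarrow> bool \<Rightarrow> bool) set" where
  "box n FU FV = {B \<in> arrays n. \<forall>i<n. (B i False False, B i False True) \<in> FU i \<and> (B i True False, B i True True) \<in> FV i}"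

definition enc :: "nat \<Rightarrow> (nat \<Rightarrow> bool \<Rightarrow> bool \<Rightarrow> bool) \<Rightarrow> nat \<Rightarrow> (bool \<times> bool) \<times> (bool \<times> bool)" where
  "enc n B = (\<lambda>i\<in>{..<n}. ((B i False False, B i False True), (B i True False, B i True True)))"

definition dec :: "nat \<Rightarrow> (nat \<Rightarrow> (bool \<times> bool) \<times> (bool \<times> bool)) \<Rightarrow> nat \<Rightarrow> bool \<Rightarrow> bool \<Rightarrow> bool" where
  "dec n f = (\<lambda>y d z. y < n \<and> (if d then (if z then snd (snd (f y)) else fst (snd (f y)))
      else (if z then snd (fst (f y)) else fst (fst (f y)))))"

lemma bij_box: "bij_betw (enc n) (box n FU FV) (PiE {..<n} (\<lambda>i. FU i \<times> FV i))"
proof (rule bij_betw_byWitness[where f'="dec n"])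
  show "\<forall>a\<in>box n FU FV. dec n (enc n a) = a"
  proof
    fix B assume B: "B \<in> box n FU FV"
    show "dec n (enc n B) = B"
    proof (intro ext)
      fix y d z
      show "dec n (enc n B) y d z = B y d z"
        using B by (cases "y < n"; cases d; cases z; simp add: dec_def enc_def box_def arrays_def)
    qed
  qed
  show "\<forall>a'\<in>PiE {..<n} (\<lambda>i. FU i \<times> FV i). enc n (dec n a') = a'"
  proof
    fix f assume f: "f \<in> PiE {..<n} (\<lambda>i. FU i \<times> FV i)"
    show "enc n (dec n f) = f"
    proof (intro ext)
      fix i show "enc n (dec n f) i = f i"
      proof (cases "i < n")
        case True
        then show ?thesis by (simp add: enc_def dec_def)
      next
        case False
        then have "f i = undefined" using f by (intro PiE_arb[of f "{..<n}"]) auto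
        then show ?thesis using False by (simp add: enc_def)
      qed
    qed
  qed
  show "enc n ` box n FU FV \<subseteq> PiE {..<n} (\<lambda>i. FU i \<times> FV i)"
  proof
    fix x assume "x \<in> enc n ` box n FU FV"
    then obtain B where B: "B \<in> box n FU FV" and x: "x = enc n B" by blast
    show "x \<in> PiE {..<n} (\<lambda>i. FU i \<times> FV i)" unfolding x
    proof (rule PiE_I)
      fix i assume "i \<in> {..<n}"
      then show "enc n B i \<in> FU i \<times> FV i" using B by (simp add: enc_def box_def)
    next
      fix i assume "i \<notin> {..<n}"
      then show "enc n B i = undefined" by (simp add: enc_def)
    qed
  qed
  show "dec n ` PiE {..<n} (\<lambda>i. FU i \<times> FV i) \<subseteq> box n FU FV"
  proof
    fix B assume "B \<in> dec n ` PiE {..<n} (\<lambda>i. FU i \<times> FV i)"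
    then obtain f where f: "f \<in> PiE {..<n} (\<lambda>i. FU i \<times> FV i)" and B: "B = dec n f" by blast
    have fi0: "f i \<in> FU i \<times> FV i" if "i < n" for i using PiE_mem[OF f, of i] that by simp
    have fi: "fst (f i) \<in> FU i" "snd (f i) \<in> FV i" if "i < n" for i using fi0[OF that] by (auto simp: mem_Times_iff)
    show "B \<in> box n FU FV" unfolding box_def
    proof (intro CollectI conjI allI impI)
      show "B \<in> arrays n" unfolding B by (simp add: arrays_def dec_def)
    next
      fix i assume i: "i < n"
      show "(B i False False, B i False True) \<in> FU i" using fi(1)[OF i] i by (simp add: B dec_def)
      show "(B i True False, B i True True) \<in> FV i" using fi(2)[OF i] i by (simp add: B dec_def)
    qed
  qed
qed

lemma finite_box: "finite (box n FU FV)"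
  using bij_betw_finite[OF bij_box[of n FU FV]] by (simp add: finite_PiE)

lemma card_box: "card (box n FU FV) = (\<Prod>i<n. card (FU i)) * (\<Prod>i<n. card (FV i))"
proof -
  have "card (box n FU FV) = card (PiE {..<n} (\<lambda>i. FU i \<times> FV i))"
    using bij_betw_same_card[OF bij_box] .
  also have "\<dots> = (\<Prod>i<n. card (FU i \<times> FV i))" by (simp add: card_PiE)
  also have "\<dots> = (\<Prod>i<n. card (FU i) * card (FV i))" by (simp add: card_cartesian_product)
  also have "\<dots> = (\<Prod>i<n. card (FU i)) * (\<Prod>i<n. card (FV i))" by (rule prod.distrib)
  finally show ?thesis .
qed

definition fr :: "(bool \<times> bool) set" where "fr = {(True, False), (False, True)}"
definition bo :: "(bool \<times> bool) set" where "bo = {(True, True)}"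

lemma card_fr: "card fr = 2" by (simp add: fr_def)
lemma card_bo: "card bo = 1" by (simp add: bo_def)

lemma prod_if2: "(\<Prod>i<(n::nat). card (if Pr i then fr else bo)) = 2 ^ card {i. i < n \<and> Pr i}"
proof -
  have "(\<Prod>i<n. card (if Pr i then fr else bo)) = (\<Prod>i<n. if Pr i then 2 else 1)"
    by (rule prod.cong) (auto simp: card_fr card_bo)
  also have "(\<Prod>i<n. if Pr i then 2 else 1) = (\<Prod>i\<in>{i\<in>{..<n}. Pr i}. (2::nat))"
    by (rule prod.inter_filter[symmetric]) simp
  also have "(\<Prod>i\<in>{i\<in>{..<n}. Pr i}. (2::nat)) = 2 ^ card {i\<in>{..<n}. Pr i}" by (rule prod_constant)
  also have "{i\<in>{..<n}. Pr i} = {i. i < n \<and> Pr i}" by auto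
  finally show ?thesis .
qed



definition S1t :: "nat \<Rightarrow> nat \<Rightarrow> (nat \<Rightarrow> bool \<Rightarrow> bool \<Rightarrow> bool) set" where
  "S1t n t = {B \<in> arrays n.
      (\<forall>i. t \<le> i \<and> i < n \<longrightarrow> B i False False \<and> B i False True) \<and>
      (\<forall>i<t. B i False False \<noteq> B i False True) \<and>
      (\<forall>i<n. B i True False \<noteq> B i True True) \<and>
      (\<exists>i<n. \<exists>j<n. B i True False \<and> B j True True)}"

definition S3t :: "nat \<Rightarrow> nat \<Rightarrow> (nat \<Rightarrow> bool \<Rightarrow> bool \<Rightarrow> bool) set" where
  "S3t n t = {B \<in> arrays n.
      (\<forall>i\<le>t. B i True False \<and> B i True True) \<and>
      (\<forall>i. t < i \<and> i < n \<longrightarrow> B i True False \<noteq> B i True True) \<and>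
      (\<forall>i<n. B i False False \<noteq> B i False True) \<and>
      (\<exists>i<n. \<exists>j<n. B i False False \<and> B j False True)}"

lemma S1_UN: "S1 n = (\<Union>t\<in>{..<n - 1}. S1t n t)"
proof (intro set_eqI iffI)
  fix B assume "B \<in> S1 n"
  then obtain t where "t + 2 \<le> n" "B \<in> S1t n t" unfolding S1_def S1t_def by blast
  moreover then have "t \<in> {..<n - 1}" by auto
  ultimately show "B \<in> (\<Union>t\<in>{..<n - 1}. S1t n t)" by blast
next
  fix B assume "B \<in> (\<Union>t\<in>{..<n - 1}. S1t n t)"
  then obtain t where "t < n - 1" "B \<in> S1t n t" by blast
  moreover then have "t + 2 \<le> n" by auto
  ultimately show "B \<in> S1 n" unfolding S1_def S1t_def by blast
qed

lemma S3_UN': "S3 n = (\<Union>t\<in>{1..<n}. S3t n t)"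
proof (intro set_eqI iffI)
  fix B assume "B \<in> S3 n"
  then obtain t where "1 \<le> t" "t + 1 \<le> n" "B \<in> S3t n t" unfolding S3_def S3t_def by blast
  moreover then have "t \<in> {1..<n}" by auto
  ultimately show "B \<in> (\<Union>t\<in>{1..<n}. S3t n t)" by blast
next
  fix B assume "B \<in> (\<Union>t\<in>{1..<n}. S3t n t)"
  then obtain t where "t \<in> {1..<n}" "B \<in> S3t n t" by blast
  moreover then have "1 \<le> t" "t + 1 \<le> n" by auto
  ultimately show "B \<in> S3 n" unfolding S3_def S3t_def by blast
qed

lemma S3_UN: "S3 n = (\<Union>s\<in>{..<n - 1}. S3t n (n - 1 - s))"
proof -
  have "{1..<n} = (\<lambda>s. n - 1 - s) ` {..<n - 1}"
  proof
    show "{1..<n} \<subseteq> (\<lambda>s. n - 1 - s) ` {..<n - 1}"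
    proof
      fix t assume "t \<in> {1..<n}"
      then have "t = n - 1 - (n - 1 - t)" "n - 1 - t < n - 1" by auto
      then show "t \<in> (\<lambda>s. n - 1 - s) ` {..<n - 1}" by blast
    qed
  qed auto
  then show ?thesis unfolding S3_UN' by simp
qed

lemma fr_iff: "(a, b) \<in> fr \<longleftrightarrow> a \<noteq> b" by (auto simp: fr_def)
lemma bo_iff: "(a, b) \<in> bo \<longleftrightarrow> a \<and> b" by (auto simp: bo_def)

lemma S1t_eq: assumes tn: "t \<le> n" shows "S1t n t = box n (\<lambda>i. if i < t then fr else bo) (\<lambda>_. fr) -
   (box n (\<lambda>i. if i < t then fr else bo) (\<lambda>_. {(True, False)}) \<union> box n (\<lambda>i. if i < t then fr else bo) (\<lambda>_. {(False, True)}))"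
  (is "_ = ?A - (?B1 \<union> ?B2)")
proof (intro set_eqI iffI)
  fix B assume B: "B \<in> S1t n t"
  then have "B \<in> ?A" by (auto simp: S1t_def box_def fr_iff bo_iff not_less)
  moreover have "B \<notin> ?B1" "B \<notin> ?B2" using B by (auto simp: S1t_def box_def)
  ultimately show "B \<in> ?A - (?B1 \<union> ?B2)" by blast
next
  fix B assume B: "B \<in> ?A - (?B1 \<union> ?B2)"
  then have A: "B \<in> arrays n" "\<And>i. i < n \<Longrightarrow> (B i False False, B i False True) \<in> (if i < t then fr else bo)"
     "\<And>i. i < n \<Longrightarrow> B i True False \<noteq> B i True True" by (auto simp: box_def fr_iff)
  from B have n1: "\<not> (\<forall>i<n. B i True False \<and> \<not> B i True True)" using A by (auto simp: box_def)
  from B have n2: "\<not> (\<forall>i<n. \<not> B i True False \<and> B i True True)" using A by (auto simp: box_def)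
  have X4: "\<exists>i<n. \<exists>j<n. B i True False \<and> B j True True" using n1 n2 A(3) by blast
  have X1: "\<forall>i. t \<le> i \<and> i < n \<longrightarrow> B i False False \<and> B i False True"
  proof (intro allI impI)
    fix i assume i: "t \<le> i \<and> i < n"
    then have "(B i False False, B i False True) \<in> bo" using A(2)[of i] by simp
    then show "B i False False \<and> B i False True" by (simp add: bo_iff)
  qed
  have X2: "\<forall>i<t. B i False False \<noteq> B i False True"
  proof (intro allI impI)
    fix i assume i: "i < t"
    then have "(B i False False, B i False True) \<in> fr" using A(2)[of i] tn by simp
    then show "B i False False \<noteq> B i False True" by (simp add: fr_iff)
  qed
  have X3: "\<forall>i<n. B i True False \<noteq> B i True True" using A(3) by blast
  show "B \<in> S1t n t" unfolding S1t_def using A(1) X1 X2 X3 X4 by (intro CollectI conjI)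
qed

lemma S3t_eq: assumes tn: "t < n" shows "S3t n t = box n (\<lambda>_. fr) (\<lambda>j. if t < j then fr else bo) -
   (box n (\<lambda>_. {(True, False)}) (\<lambda>j. if t < j then fr else bo) \<union> box n (\<lambda>_. {(False, True)}) (\<lambda>j. if t < j then fr else bo))"
  (is "_ = ?A - (?B1 \<union> ?B2)")
proof (intro set_eqI iffI)
  fix B assume B: "B \<in> S3t n t"
  then have "B \<in> ?A" using tn by (auto simp: S3t_def box_def fr_iff bo_iff not_less)
  moreover have "B \<notin> ?B1" "B \<notin> ?B2" using B by (auto simp: S3t_def box_def)
  ultimately show "B \<in> ?A - (?B1 \<union> ?B2)" by blast
next
  fix B assume B: "B \<in> ?A - (?B1 \<union> ?B2)"
  then have A: "B \<in> arrays n" "\<And>i. i < n \<Longrightarrow> (B i True False, B i True True) \<in> (if t < i then fr else bo)"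
     "\<And>i. i < n \<Longrightarrow> B i False False \<noteq> B i False True" by (auto simp: box_def fr_iff)
  from B have n1: "\<not> (\<forall>i<n. B i False False \<and> \<not> B i False True)" using A by (auto simp: box_def)
  from B have n2: "\<not> (\<forall>i<n. \<not> B i False False \<and> B i False True)" using A by (auto simp: box_def)
  have X4: "\<exists>i<n. \<exists>j<n. B i False False \<and> B j False True" using n1 n2 A(3) by blast
  have X1: "\<forall>i\<le>t. B i True False \<and> B i True True"
  proof (intro allI impI)
    fix i assume i: "i \<le> t"
    then have "(B i True False, B i True True) \<in> bo" using A(2)[of i] tn by simp
    then show "B i True False \<and> B i True True" by (simp add: bo_iff)
  qed
  have X2: "\<forall>i. t < i \<and> i < n \<longrightarrow> B i True False \<noteq> B i True True"
  proof (intro allI impI)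
    fix i assume i: "t < i \<and> i < n"
    then have "(B i True False, B i True True) \<in> fr" using A(2)[of i] by simp
    then show "B i True False \<noteq> B i True True" by (simp add: fr_iff)
  qed
  have X3: "\<forall>i<n. B i False False \<noteq> B i False True" using A(3) by blast
  show "B \<in> S3t n t" unfolding S3t_def using A(1) X1 X2 X3 X4 by (intro CollectI conjI)
qed

lemma S2_eq: assumes n1: "1 \<le> n"
  shows "S2 n = box n (\<lambda>i. if i < n - 1 then fr else bo) (\<lambda>j. if 0 < j then fr else bo)"
proof (intro set_eqI iffI)
  fix B assume B: "B \<in> S2 n"
  show "B \<in> box n (\<lambda>i. if i < n - 1 then fr else bo) (\<lambda>j. if 0 < j then fr else bo)"
    unfolding box_def
  proof (intro CollectI conjI allI impI)
    show "B \<in> arrays n" using B by (simp add: S2_def)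
  next
    fix i assume i: "i < n"
    show "(B i False False, B i False True) \<in> (if i < n - 1 then fr else bo)"
    proof (cases "i < n - 1")
      case False then have "i = n - 1" using i by auto
      then show ?thesis using B by (simp add: S2_def bo_iff)
    qed (use B in \<open>simp add: S2_def fr_iff\<close>)
    show "(B i True False, B i True True) \<in> (if 0 < i then fr else bo)"
    proof (cases "0 < i")
      case False then have "i = 0" by auto
      then show ?thesis using B by (simp add: S2_def bo_iff)
    qed (use B i in \<open>simp add: S2_def fr_iff\<close>)
  qed
next
  fix B assume B: "B \<in> box n (\<lambda>i. if i < n - 1 then fr else bo) (\<lambda>j. if 0 < j then fr else bo)"
  then have A: "B \<in> arrays n" "\<And>i. i < n \<Longrightarrow> (B i False False, B i False True) \<in> (if i < n - 1 then fr else bo)"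
    "\<And>i. i < n \<Longrightarrow> (B i True False, B i True True) \<in> (if 0 < i then fr else bo)"
    by (auto simp: box_def)
  have n0: "n - 1 < n" "0 < n" using n1 by auto
  have "(B (n - 1) False False, B (n - 1) False True) \<in> bo" using A(2)[OF n0(1)] by simp
  moreover have "(B 0 True False, B 0 True True) \<in> bo" using A(3)[OF n0(2)] by simp
  moreover have "\<forall>i. i < n - 1 \<longrightarrow> B i False False \<noteq> B i False True"
  proof (intro allI impI)
    fix i assume "i < n - 1"
    then show "B i False False \<noteq> B i False True" using A(2)[of i] by (simp add: fr_iff)
  qed
  moreover have "\<forall>j. 0 < j \<and> j < n \<longrightarrow> B j True False \<noteq> B j True True"
  proof (intro allI impI)
    fix j assume "0 < j \<and> j < n"
    then show "B j True False \<noteq> B j True True" using A(3)[of j] by (simp add: fr_iff)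
  qed
  ultimately show "B \<in> S2 n" using A(1) unfolding S2_def by (simp add: bo_iff)
qed

lemma box_mono: "(\<And>i. i < n \<Longrightarrow> FU i \<subseteq> FU' i) \<Longrightarrow> (\<And>i. i < n \<Longrightarrow> FV i \<subseteq> FV' i) \<Longrightarrow> box n FU FV \<subseteq> box n FU' FV'"
  unfolding box_def by blast

lemma card_diff2: assumes "finite A" "B1 \<subseteq> A" "B2 \<subseteq> A" "B1 \<inter> B2 = {}"
  shows "card (A - (B1 \<union> B2)) = card A - card B1 - card B2"
proof -
  have "card (A - (B1 \<union> B2)) = card A - card (B1 \<union> B2)"
    using assms by (intro card_Diff_subset) (auto intro: finite_subset)
  also have "card (B1 \<union> B2) = card B1 + card B2"
    using assms by (intro card_Un_disjoint) (auto intro: finite_subset)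
  finally show ?thesis by simp
qed

lemma card_lt: "t \<le> n \<Longrightarrow> card {i. i < n \<and> i < (t::nat)} = t"
proof -
  assume "t \<le> n"
  then have "{i. i < n \<and> i < t} = {..<t}" by auto
  then show ?thesis by simp
qed

lemma card_gt: "card {i. i < n \<and> (t::nat) < i} = n - Suc t"
proof -
  have "{i. i < n \<and> t < i} = {Suc t..<n}" by auto
  then show ?thesis by simp
qed

lemma card_S1t: assumes n1: "1 \<le> n" and tn: "t \<le> n" shows "card (S1t n t) = 2 ^ t * 2 ^ n - 2 ^ t - 2 ^ t"
proof -
  let ?U = "\<lambda>i. if i < t then fr else bo"
  have sub1: "box n ?U (\<lambda>_. {(True, False)}) \<subseteq> box n ?U (\<lambda>_. fr)" by (rule box_mono) (auto simp: fr_def)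
  have sub2: "box n ?U (\<lambda>_. {(False, True)}) \<subseteq> box n ?U (\<lambda>_. fr)" by (rule box_mono) (auto simp: fr_def)
  have dis: "box n ?U (\<lambda>_. {(True, False)}) \<inter> box n ?U (\<lambda>_. {(False, True)}) = {}"
    using n1 by (auto simp: box_def)
  have cA: "card (box n ?U (\<lambda>_. fr)) = 2 ^ t * 2 ^ n"
    by (simp add: card_box prod_if2 card_lt[OF tn] card_fr)
  have cB1: "card (box n ?U (\<lambda>_. {(True, False)})) = 2 ^ t"
    by (simp add: card_box prod_if2 card_lt[OF tn])
  have cB2: "card (box n ?U (\<lambda>_. {(False, True)})) = 2 ^ t"
    by (simp add: card_box prod_if2 card_lt[OF tn])
  show ?thesis unfolding S1t_eq[OF tn] card_diff2[OF finite_box sub1 sub2 dis] cA cB1 cB2 ..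
qed

lemma card_S3t: assumes n1: "1 \<le> n" and tn: "t < n" shows "card (S3t n t) = 2 ^ n * 2 ^ (n - Suc t) - 2 ^ (n - Suc t) - 2 ^ (n - Suc t)"
proof -
  let ?V = "\<lambda>j. if t < j then fr else bo"
  have sub1: "box n (\<lambda>_. {(True, False)}) ?V \<subseteq> box n (\<lambda>_. fr) ?V" by (rule box_mono) (auto simp: fr_def)
  have sub2: "box n (\<lambda>_. {(False, True)}) ?V \<subseteq> box n (\<lambda>_. fr) ?V" by (rule box_mono) (auto simp: fr_def)
  have dis: "box n (\<lambda>_. {(True, False)}) ?V \<inter> box n (\<lambda>_. {(False, True)}) ?V = {}"
    using n1 by (auto simp: box_def)
  have cA: "card (box n (\<lambda>_. fr) ?V) = 2 ^ n * 2 ^ (n - Suc t)"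
    by (simp add: card_box prod_if2 card_gt card_fr)
  have cB1: "card (box n (\<lambda>_. {(True, False)}) ?V) = 2 ^ (n - Suc t)"
    by (simp add: card_box prod_if2 card_gt)
  have cB2: "card (box n (\<lambda>_. {(False, True)}) ?V) = 2 ^ (n - Suc t)"
    by (simp add: card_box prod_if2 card_gt)
  show ?thesis unfolding S3t_eq[OF tn] card_diff2[OF finite_box sub1 sub2 dis] cA cB1 cB2 ..
qed

lemma card_S2: assumes n1: "1 \<le> n" shows "card (S2 n) = 2 ^ (n - 1) * 2 ^ (n - 1)"
proof -
  have le: "n - 1 \<le> n" by simp
  have a: "card {i. i < n \<and> i < n - 1} = n - 1" using card_lt[OF le] .
  have b: "card {i. i < n \<and> 0 < i} = n - 1" using card_gt[of n 0] by simp
  show ?thesis unfolding S2_eq[OF n1] card_box prod_if2 a b by simp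
qed


lemma finite_S1t: "t \<le> n \<Longrightarrow> finite (S1t n t)"
  by (simp add: S1t_eq finite_box)
lemma finite_S3t: "t < n \<Longrightarrow> finite (S3t n t)"
  by (simp add: S3t_eq finite_box)

lemma card_S1: assumes n1: "1 \<le> n" shows "card (S1 n) = (\<Sum>t<n - 1. 2 ^ t * 2 ^ n - 2 ^ t - 2 ^ t)"
proof -
  have "card (S1 n) = (\<Sum>t<n - 1. card (S1t n t))"
    unfolding S1_UN
  proof (rule card_UN_disjoint)
    show "finite {..<n - 1}" by simp
    show "\<forall>i\<in>{..<n - 1}. finite (S1t n i)" using finite_S1t by auto
    show "\<forall>i\<in>{..<n - 1}. \<forall>j\<in>{..<n - 1}. i \<noteq> j \<longrightarrow> S1t n i \<inter> S1t n j = {}"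
    proof (intro ballI impI)
      fix i j assume i: "i \<in> {..<n - 1}" and j: "j \<in> {..<n - 1}" and ij: "i \<noteq> j"
      have "S1t n a \<inter> S1t n b = {}" if "a < b" "b < n - 1" for a b
      proof -
        have "B \<notin> S1t n b" if "B \<in> S1t n a" for B
        proof
          assume "B \<in> S1t n b"
          then have "B a False False \<noteq> B a False True" using \<open>a < b\<close> by (simp add: S1t_def)
          moreover have "B a False False \<and> B a False True" using \<open>B \<in> S1t n a\<close> \<open>a < b\<close> \<open>b < n - 1\<close> by (simp add: S1t_def)
          ultimately show False by simp
        qed
        then show ?thesis by blast
      qed
      note L = this
      show "S1t n i \<inter> S1t n j = {}"
      proof (cases "i < j")
        case True then show ?thesis using L j by blast
      next
        case False
        then have "j < i" using ij by linarith
        then have "S1t n j \<inter> S1t n i = {}" using L i by blast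
        then show ?thesis by (simp add: Int_commute)
      qed
    qed
  qed
  also have "\<dots> = (\<Sum>t<n - 1. 2 ^ t * 2 ^ n - 2 ^ t - 2 ^ t)"
    by (rule sum.cong) (auto simp: card_S1t[OF n1])
  finally show ?thesis .
qed

lemma card_S3: assumes n1: "1 \<le> n" shows "card (S3 n) = (\<Sum>s<n - 1. 2 ^ n * 2 ^ s - 2 ^ s - 2 ^ s)"
proof -
  have "card (S3 n) = (\<Sum>s<n - 1. card (S3t n (n - 1 - s)))"
    unfolding S3_UN
  proof (rule card_UN_disjoint)
    show "finite {..<n - 1}" by simp
    show "\<forall>i\<in>{..<n - 1}. finite (S3t n (n - 1 - i))" using finite_S3t n1 by auto
    show "\<forall>i\<in>{..<n - 1}. \<forall>j\<in>{..<n - 1}. i \<noteq> j \<longrightarrow> S3t n (n - 1 - i) \<inter> S3t n (n - 1 - j) = {}"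
    proof (intro ballI impI)
      fix i j assume i: "i \<in> {..<n - 1}" and j: "j \<in> {..<n - 1}" and ij: "i \<noteq> j"
      have ne: "n - 1 - i \<noteq> n - 1 - j" using i j ij by auto
      have "S3t n a \<inter> S3t n b = {}" if "a < b" "b < n" for a b
      proof -
        have "B \<notin> S3t n b" if "B \<in> S3t n a" for B
        proof
          assume "B \<in> S3t n b"
          then have "B b True False \<and> B b True True" by (simp add: S3t_def)
          moreover have "B b True False \<noteq> B b True True" using \<open>B \<in> S3t n a\<close> \<open>a < b\<close> \<open>b < n\<close> by (simp add: S3t_def)
          ultimately show False by simp
        qed
        then show ?thesis by blast
      qed
      note L = this
      have lt: "n - 1 - i < n" "n - 1 - j < n" using n1 by auto
      show "S3t n (n - 1 - i) \<inter> S3t n (n - 1 - j) = {}"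
      proof (cases "n - 1 - i < n - 1 - j")
        case True then show ?thesis using L lt by blast
      next
        case False
        then have "n - 1 - j < n - 1 - i" using ne by linarith
        then have "S3t n (n - 1 - j) \<inter> S3t n (n - 1 - i) = {}" using L lt by blast
        then show ?thesis by (simp add: Int_commute)
      qed
    qed
  qed
  also have "\<dots> = (\<Sum>s<n - 1. 2 ^ n * 2 ^ s - 2 ^ s - 2 ^ s)"
  proof (rule sum.cong)
    fix s assume s: "s \<in> {..<n - 1}"
    then have e: "n - Suc (n - 1 - s) = s" by auto
    show "card (S3t n (n - 1 - s)) = 2 ^ n * 2 ^ s - 2 ^ s - 2 ^ s"
      using card_S3t[OF n1, of "n - 1 - s"] s n1 e by auto
  qed simp
  finally show ?thesis .
qed

lemma Ssig_disj: assumes n1: "1 \<le> n"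
  shows "S1 n \<inter> S2 n = {}" "(S1 n \<union> S2 n) \<inter> S3 n = {}"
proof -
  have n0: "0 < n" "n - 1 < n" using n1 by auto
  show "S1 n \<inter> S2 n = {}"
  proof (rule ccontr)
    assume "S1 n \<inter> S2 n \<noteq> {}"
    then obtain B where "B \<in> S1 n" "B \<in> S2 n" by blast
    then show False using n0 unfolding S1_def S2_def by auto
  qed
  show "(S1 n \<union> S2 n) \<inter> S3 n = {}"
  proof (rule ccontr)
    assume "(S1 n \<union> S2 n) \<inter> S3 n \<noteq> {}"
    then obtain B where B: "B \<in> S1 n \<or> B \<in> S2 n" "B \<in> S3 n" by blast
    have "\<forall>i<n. B i False False \<noteq> B i False True" using B(2) unfolding S3_def by blast
    then have "B (n - 1) False False \<noteq> B (n - 1) False True" using n0(2) by blast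
    moreover have "B (n - 1) False False \<and> B (n - 1) False True"
    proof (cases "B \<in> S1 n")
      case True
      then obtain t where "t + 2 \<le> n" "\<forall>i. t \<le> i \<and> i < n \<longrightarrow> B i False False \<and> B i False True"
        by (auto simp: S1_def)
      then show ?thesis using n0 by auto
    next
      case False then show ?thesis using B(1) by (simp add: S2_def)
    qed
    ultimately show False by simp
  qed
qed

lemma geo: "(\<Sum>t<m. (2::nat) ^ t) = 2 ^ m - 1"
  by (induction m) auto

lemma sum_form: assumes n1: "1 \<le> n"
  shows "(\<Sum>t<m. (2::nat) ^ t * 2 ^ n - 2 ^ t - 2 ^ t) = (2 ^ n - 2) * (2 ^ m - 1)"
proof -
  have "2 ^ 1 \<le> (2::nat) ^ n" using n1 by (intro power_increasing) auto
  then have "(2::nat) ^ t * 2 ^ n - 2 ^ t - 2 ^ t = (2 ^ n - 2) * 2 ^ t" for t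
    by (simp add: algebra_simps diff_mult_distrib)
  then have "(\<Sum>t<m. (2::nat) ^ t * 2 ^ n - 2 ^ t - 2 ^ t) = (\<Sum>t<m. (2 ^ n - 2) * 2 ^ t)" by simp
  also have "\<dots> = (2 ^ n - 2) * (\<Sum>t<m. 2 ^ t)" by (simp add: sum_distrib_left)
  finally show ?thesis by (simp add: geo)
qed

lemma sum_form': assumes n1: "1 \<le> n"
  shows "(\<Sum>t<m. (2::nat) ^ n * 2 ^ t - 2 ^ t - 2 ^ t) = (2 ^ n - 2) * (2 ^ m - 1)"
  using sum_form[OF n1, of m] by (simp add: mult.commute)

lemma arith_final: fixes k :: nat
  shows "int ((2 ^ Suc k - 2) * (2 ^ k - 1) + 2 ^ k * 2 ^ k + (2 ^ Suc k - 2) * (2 ^ k - 1))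
     = 5 * 4 ^ k - 2 ^ (Suc k + 2) + 4"
proof -
  define x :: nat where "x = 2 ^ k"
  have x1: "1 \<le> x" unfolding x_def by simp
  have e1: "(2::nat) ^ Suc k = 2 * x" by (simp add: x_def)
  have e2: "(4::int) ^ k = int x * int x" by (simp add: x_def power_mult_distrib[symmetric])
  have e3: "(2::int) ^ (Suc k + 2) = 8 * int x" by (simp add: x_def)
  have "int ((2 ^ Suc k - 2) * (2 ^ k - 1) + 2 ^ k * 2 ^ k + (2 ^ Suc k - 2) * (2 ^ k - 1))
      = (2 * int x - 2) * (int x - 1) + int x * int x + (2 * int x - 2) * (int x - 1)"
    unfolding e1 x_def[symmetric] using x1 by (simp add: of_nat_diff)
  also have "\<dots> = 5 * (int x * int x) - 8 * int x + 4" by (simp add: algebra_simps)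
  finally show ?thesis unfolding e2 e3 .
qed

lemma card_Ssig: assumes n1: "1 \<le> n"
  shows "int (card (Ssig n)) = 5 * 4 ^ (n - 1) - 2 ^ (n + 2) + 4"
proof -
  have f1: "finite (S1 n)" unfolding S1_UN by (intro finite_UN_I) (auto intro: finite_S1t)
  have f2: "finite (S2 n)" unfolding S2_eq[OF n1] by (rule finite_box)
  have f3: "finite (S3 n)" unfolding S3_UN by (intro finite_UN_I) (auto intro: finite_S3t)
  have d: "S1 n \<inter> S2 n = {}" "(S1 n \<union> S2 n) \<inter> S3 n = {}" using Ssig_disj[OF n1] by auto
  have "card (Ssig n) = card (S1 n \<union> S2 n) + card (S3 n)"
    unfolding Ssig_def by (rule card_Un_disjoint) (use f1 f2 f3 d in auto)
  also have "card (S1 n \<union> S2 n) = card (S1 n) + card (S2 n)"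
    by (rule card_Un_disjoint) (use f1 f2 d in auto)
  finally have c0: "card (Ssig n) = card (S1 n) + card (S2 n) + card (S3 n)" .
  obtain k where k: "n = Suc k" using n1 by (cases n) auto
  have c1: "card (S1 n) = (2 ^ n - 2) * (2 ^ (n - 1) - 1)" unfolding card_S1[OF n1] by (rule sum_form[OF n1])
  have c3: "card (S3 n) = (2 ^ n - 2) * (2 ^ (n - 1) - 1)" unfolding card_S3[OF n1] by (rule sum_form'[OF n1])
  have c2: "card (S2 n) = 2 ^ (n - 1) * 2 ^ (n - 1)" by (rule card_S2[OF n1])
  have cc: "card (Ssig n) = (2 ^ n - 2) * (2 ^ (n - 1) - 1) + 2 ^ (n - 1) * 2 ^ (n - 1) + (2 ^ n - 2) * (2 ^ (n - 1) - 1)"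
    using c0 c1 c2 c3 by simp
  show ?thesis unfolding cc using arith_final[of k] unfolding k by simp
qed

lemma card_classes:
  assumes "\<forall>x\<in>A. \<forall>y\<in>A. f x = f y \<longleftrightarrow> g x = g y"
  shows "card (f ` A) = card (g ` A)"
proof -
  define h where "h = (\<lambda>a. g (SOME x. x \<in> A \<and> f x = a))"
  have hf: "h (f x) = g x" if "x \<in> A" for x
  proof -
    have "\<exists>y. y \<in> A \<and> f y = f x" using that by blast
    then have "(SOME y. y \<in> A \<and> f y = f x) \<in> A \<and> f (SOME y. y \<in> A \<and> f y = f x) = f x" by (rule someI_ex)
    then show ?thesis unfolding h_def using assms that by blast
  qed
  have inj: "inj_on h (f ` A)"
  proof (rule inj_onI)
    fix a b assume "a \<in> f ` A" "b \<in> f ` A" "h a = h b"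
    then obtain x y where "x \<in> A" "y \<in> A" "a = f x" "b = f y" "h (f x) = h (f y)" by blast
    then show "a = b" using hf assms by metis
  qed
  have img: "h ` (f ` A) = g ` A" using hf by (auto simp: image_iff)
  show ?thesis using card_image[OF inj] img by simp
qed

context
  fixes n :: nat and \<gamma> :: "nat \<Rightarrow> real"
  assumes n1: "1 \<le> n"
    and gmono: "\<And>i j. i < j \<Longrightarrow> j < n \<Longrightarrow> \<gamma> i < \<gamma> j"
begin

lemma vig: "v \<in> Hpoly n \<gamma> \<Longrightarrow> is_vertex n \<gamma> v \<longleftrightarrow> good n \<gamma> v"
  using n1 gmono by (rule vertex_iff_good)

lemma V_iff: "is_vertex n \<gamma> v \<longleftrightarrow> v \<in> Hpoly n \<gamma> \<and> good n \<gamma> v"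
  using vig[of v] by (auto simp: is_vertex_def)

lemma Ssig_arr: "B \<in> Ssig n \<Longrightarrow> B \<in> arrays n"
  by (auto simp: Ssig_def S1_def S2_def S3_def)

lemma main_card: "card (Mvec n ` {v. is_vertex n \<gamma> v}) = card (Ssig n)"
proof -
  let ?V = "{v. is_vertex n \<gamma> v}"
  have sV: "sig n \<gamma> ` ?V = Ssig n"
  proof
    show "sig n \<gamma> ` ?V \<subseteq> Ssig n"
    proof
      fix B assume "B \<in> sig n \<gamma> ` ?V"
      then obtain v where v: "is_vertex n \<gamma> v" "B = sig n \<gamma> v" by blast
      then have vh: "v \<in> Hpoly n \<gamma>" and vg: "good n \<gamma> v" using V_iff by auto
      have a1: "adm n \<gamma> (sig n \<gamma> v) (PM n \<gamma> v + QM n \<gamma> v)" using n1 gmono vh vg by (rule good_adm)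
      have a2: "sig n \<gamma> v \<in> arrays n" using n1 gmono by (rule sig_arr)
      have "sig n \<gamma> v \<in> Ssig n" using n1 gmono a1 a2 by (rule adm_S)
      then show "B \<in> Ssig n" using v(2) by simp
    qed
    show "Ssig n \<subseteq> sig n \<gamma> ` ?V"
    proof
      fix B assume B: "B \<in> Ssig n"
      have "\<exists>\<kappa>. adm n \<gamma> B \<kappa>" using n1 gmono B by (rule S_adm)
      then obtain \<kappa> where k: "adm n \<gamma> B \<kappa>" by blast
      have "\<exists>v. v \<in> Hpoly n \<gamma> \<and> good n \<gamma> v \<and> sig n \<gamma> v = B"
        using n1 gmono k Ssig_arr[OF B] by (rule adm_good)
      then obtain v where v: "v \<in> Hpoly n \<gamma>" "good n \<gamma> v" "sig n \<gamma> v = B" by blast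
      then show "B \<in> sig n \<gamma> ` ?V" using V_iff by blast
    qed
  qed
  have eq: "\<forall>x\<in>?V. \<forall>y\<in>?V. Mvec n x = Mvec n y \<longleftrightarrow> sig n \<gamma> x = sig n \<gamma> y"
  proof (intro ballI iffI)
    fix x y assume x: "x \<in> ?V" and y: "y \<in> ?V"
    show "sig n \<gamma> x = sig n \<gamma> y" if "Mvec n x = Mvec n y" using n1 gmono that by (rule mvec_sig)
    have hx: "x \<in> Hpoly n \<gamma>" "good n \<gamma> x" using x V_iff by auto
    have hy: "y \<in> Hpoly n \<gamma>" "good n \<gamma> y" using y V_iff by auto
    show "Mvec n x = Mvec n y" if "sig n \<gamma> x = sig n \<gamma> y"
      using n1 gmono hx(1) hy(1) hx(2) hy(2) that by (rule sig_mvec)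
  qed
  show ?thesis using card_classes[OF eq] sV by simp
qed

end

theorem corollary1:
  fixes n :: nat and \<gamma> :: "nat \<Rightarrow> real"
  assumes "1 \<le> n"
    and "\<And>i j. i < j \<Longrightarrow> j < n \<Longrightarrow> \<gamma> i < \<gamma> j"
  shows "int (card (Mvec n ` {v. is_vertex n \<gamma> v})) = 5 * 4 ^ (n - 1) - 2 ^ (n + 2) + 4
    \<and> int (card (Ssig n)) = 5 * 4 ^ (n - 1) - 2 ^ (n + 2) + 4"
proof -
  have c: "card (Mvec n ` {v. is_vertex n \<gamma> v}) = card (Ssig n)" using assms(1) assms(2) by (rule main_card)
  have s: "int (card (Ssig n)) = 5 * 4 ^ (n - 1) - 2 ^ (n + 2) + 4" using assms(1) by (rule card_Ssig)
  show ?thesis using c s by simp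
qed

end
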